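(* Assume $G$ and $G'$ are nonamenable. For each $n$, let $v''_n:=|D_n(o'')|$, let $\Phi_n\subseteq G''$ be a Bernoulli random subset in which each point of $G''$ is included independently with probability $1/v''_n$, and let $\mathbf C_n:=\{(D_n(x''),x''): x''\in\Phi_n\}$, a point process in $\mathcal C(G'')$. Suppose $(n_k)$ is a strictly increasing sequence such that $\mathbf C_{n_k}$ converges weakly to a point process $\mathbf C$ in $\mathcal C(G'')$. Then almost surely $\mathbf C\ne\emptyset$ and every element of $\mathbf C$ is a perturbed pointed horoball of type II (possibly with infinite delay).
   Context: $G,G'$ are finitely generated groups with neutral elements $o,o'$, word metrics $d,d'$ from Cayley graphs with respect to finite generating sets, ball volumes $v_n,v'_n$, growth rates $a=\lim v_n^{1/n}$, $a'=\lim (v'_n)^{1/n}$ (both $>1$ under nonamenability), and $c:=\log a/\log a'$. $G''=G\times G'$ has origin $o''=(o,o')$ and metric $\rho_c((x,x'),(y,y'))=d(x,y)+d'(x',y')/c$. Fix a non-decreasing $f:\mathbb Z_{\ge0}\to\mathbb Z_{\ge0}$ and a strictly increasing sequence $(r_j)$ in $\mathbb Z_{\ge0}$ with $f(0)=0$, $r'_j:=f(r_j)$, $0<\inf_n v'_{r'_n}/v_{r_n}\le \sup_n v'_{r'_n}/v_{r_n}<\infty$ and $\forall m\,\exists N\,\forall n\ge N:|f(n+m)-f(n)-cm|\le1$. Perturbed diamond: $D_n(x''):=\bigcup_{t=0}^{r_n}\{(y,y'):d(x,y)=r_n-t,\ d'(x',y')\le f(t)\}$ for $x''=(x,x')$.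 Horocompactification $\overline{G''}$ of $(G'',\rho_c)$: with $\rho_{x''}(y'')=\rho_c(x'',y'')-\rho_c(x'',o'')$, the closure of $\{\rho_{x''}\}$ among $1$-Lipschitz functions vanishing at $o''$ under pointwise convergence; similarly $\overline G,\overline{G'}$, and $\partial G=\overline G\setminus G$, $\partial G'$. For $\theta\in\partial G$, $\theta'\in\partial G'$, $(\theta,\theta')\in\partial G''$ is the function $(y,y')\mapsto d_\theta(y)+d_{\theta'}(y')/c$. $\mathcal C(G'')$ is the Polish space of pairs $(B,\theta)$ with $B\subseteq G''$ nonempty and $\theta\in\overline{G''}$, with the product of the Fell topology (pointwise convergence of indicators) and the topology of $\overline{G''}$; point processes in it are random multisets such that each $y''\in G''$ lies in $B$ for only finitely many elements $(B,\theta)$, with weak convergence with respect to vague convergence of counting measures. A perturbed pointed horoball of type II is a pointed set $(B,\theta'')$ which is a limit in $\mathcal C(G'')$ of pointed perturbed diamonds $(D_{m_k}(x''_k),x''_k)$ (parameters $m_k\to\infty$) with centers $x''_k=(x_k,x'_k)$ satisfying $d(x_k,o)\to\infty$ and $d'(x'_k,o')\to\infty$; additionally $(G'',\theta'')$ for any $\theta''\in\partial G\times\partial G'$ counts as one with infinite delay. *)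

theory Defs
  imports "HOL-Analysis.Analysis" "HOL-Probability.Probability"
begin

definition gens :: "'a::group_add set \<Rightarrow> 'a set" where
  "gens S = S \<union> uminus ` S"

definition generates :: "'a::group_add set \<Rightarrow> bool" where
  "generates S \<longleftrightarrow> (\<forall>x. \<exists>ws. set ws \<subseteq> gens S \<and> sum_list ws = x)"

definition word_len :: "'a::group_add set \<Rightarrow> 'a \<Rightarrow> nat" where
  "word_len S x = (LEAST n. \<exists>ws. length ws = n \<and> set ws \<subseteq> gens S \<and> sum_list ws = x)"

text \<open>Left-invariant word metric of the Cayley graph (edges x -- x + s).\<close>
definition wdist :: "'a::group_add set \<Rightarrow> 'a \<Rightarrow> 'a \<Rightarrow> nat" where
  "wdist S x y = word_len S (- x + y)"

definition ball_vol :: "'a::group_add set \<Rightarrow> nat \<Rightarrow> nat" where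
  "ball_vol S n = card {x. wdist S 0 x \<le> n}"

definition growth_rate :: "'a::group_add set \<Rightarrow> real" where
  "growth_rate S = lim (\<lambda>n. root n (real (ball_vol S n)))"

definition nonamenable :: "'a::group_add set \<Rightarrow> bool" where
  "nonamenable S \<longleftrightarrow> (\<exists>\<epsilon>>0. \<forall>F. finite F \<and> F \<noteq> {} \<longrightarrow>
      \<epsilon> * real (card F) \<le> real (card {y. y \<notin> F \<and> (\<exists>x\<in>F. \<exists>s\<in>gens S. y = x + s)}))"

definition cexp :: "'a::group_add set \<Rightarrow> 'b::group_add set \<Rightarrow> real" where
  "cexp S S' = ln (growth_rate S) / ln (growth_rate S')"

definition rho_c :: "'a::group_add set \<Rightarrow> 'b::group_add set \<Rightarrow> 'a \<times> 'b \<Rightarrow> 'a \<times> 'b \<Rightarrow> real" where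
  "rho_c S S' p q = real (wdist S (fst p) (fst q)) + real (wdist S' (snd p) (snd q)) / cexp S S'"

definition horo :: "'a::group_add set \<Rightarrow> 'b::group_add set \<Rightarrow> 'a \<times> 'b \<Rightarrow> ('a \<times> 'b \<Rightarrow> real)" where
  "horo S S' x = (\<lambda>y. rho_c S S' x y - rho_c S S' x (0, 0))"

definition horo_comp :: "'a::group_add set \<Rightarrow> 'b::group_add set \<Rightarrow> ('a \<times> 'b \<Rightarrow> real) set" where
  "horo_comp S S' = (product_topology (\<lambda>_. euclideanreal) UNIV) closure_of (range (horo S S'))"

definition horo1 :: "'a::group_add set \<Rightarrow> 'a \<Rightarrow> ('a \<Rightarrow> real)" where
  "horo1 S x = (\<lambda>y. real (wdist S x y) - real (wdist S x 0))"

definition horo_comp1 :: "'a::group_add set \<Rightarrow> ('a \<Rightarrow> real) set" where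
  "horo_comp1 S = (product_topology (\<lambda>_. euclideanreal) UNIV) closure_of (range (horo1 S))"

definition horo_bdry1 :: "'a::group_add set \<Rightarrow> ('a \<Rightarrow> real) set" where
  "horo_bdry1 S = horo_comp1 S - range (horo1 S)"

text \<open>The part dG x dG' of the boundary of G''.\<close>
definition prod_bdry :: "'a::group_add set \<Rightarrow> 'b::group_add set \<Rightarrow> ('a \<times> 'b \<Rightarrow> real) set" where
  "prod_bdry S S' = {(\<lambda>(y, y'). \<theta> y + \<theta>' y' / cexp S S') | \<theta> \<theta>'. \<theta> \<in> horo_bdry1 S \<and> \<theta>' \<in> horo_bdry1 S'}"

definition diamond :: "'a::group_add set \<Rightarrow> 'b::group_add set \<Rightarrow> (nat \<Rightarrow> nat) \<Rightarrow> (nat \<Rightarrow> nat)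
    \<Rightarrow> nat \<Rightarrow> 'a \<times> 'b \<Rightarrow> ('a \<times> 'b) set" where
  "diamond S S' f r n x = (\<Union>t\<in>{0..r n}.
      {(y, y'). wdist S (fst x) y = r n - t \<and> wdist S' (snd x) y' \<le> f t})"

definition Cspace :: "'a::group_add set \<Rightarrow> 'b::group_add set \<Rightarrow> (('a \<times> 'b) set \<times> ('a \<times> 'b \<Rightarrow> real)) set" where
  "Cspace S S' = {(B, \<theta>). B \<noteq> {} \<and> \<theta> \<in> horo_comp S S'}"

text \<open>Fell topology = pointwise convergence of indicators.\<close>
definition fell_top :: "'c set topology" where
  "fell_top = pullback_topology UNIV (\<lambda>B y. y \<in> B) (product_topology (\<lambda>_. discrete_topology UNIV) UNIV)"

definition Ctop :: "'a::group_add set \<Rightarrow> 'b::group_add set \<Rightarrow> (('a \<times> 'b) set \<times> ('a \<times> 'b \<Rightarrow> real)) topology" where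
  "Ctop S S' = subtopology (prod_topology fell_top (product_topology (\<lambda>_. euclideanreal) UNIV)) (Cspace S S')"

definition horoball_II :: "'a::group_add set \<Rightarrow> 'b::group_add set \<Rightarrow> (nat \<Rightarrow> nat) \<Rightarrow> (nat \<Rightarrow> nat)
    \<Rightarrow> ('a \<times> 'b) set \<times> ('a \<times> 'b \<Rightarrow> real) \<Rightarrow> bool" where
  "horoball_II S S' f r e \<longleftrightarrow>
     (\<exists>m x. filterlim m at_top sequentially
        \<and> filterlim (\<lambda>k. wdist S 0 (fst (x k))) at_top sequentially
        \<and> filterlim (\<lambda>k. wdist S' 0 (snd (x k))) at_top sequentially
        \<and> limitin (Ctop S S') (\<lambda>k. (diamond S S' f r (m k) (x k), horo S S' (x k))) e sequentially)
   \<or> (fst e = UNIV \<and> snd e \<in> prod_bdry S S')"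

text \<open>Locally finite counting measures (multisets) on C(G'').\<close>
definition Nspace :: "'a::group_add set \<Rightarrow> 'b::group_add set
    \<Rightarrow> ((('a \<times> 'b) set \<times> ('a \<times> 'b \<Rightarrow> real)) \<Rightarrow> nat) set" where
  "Nspace S S' = {\<nu>. (\<forall>e. 0 < \<nu> e \<longrightarrow> e \<in> Cspace S S') \<and> (\<forall>y. finite {e. 0 < \<nu> e \<and> y \<in> fst e})}"

text \<open>Test functions for vague convergence: continuous, with bounded support
  (support inside finitely many sets of the form {(B,theta). y \<in> B}).\<close>
definition test_fun :: "'a::group_add set \<Rightarrow> 'b::group_add set
    \<Rightarrow> ((('a \<times> 'b) set \<times> ('a \<times> 'b \<Rightarrow> real)) \<Rightarrow> real) \<Rightarrow> bool" where
  "test_fun S S' g \<longleftrightarrow> continuous_map (Ctop S S') euclideanreal g \<and>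
     (\<exists>F. finite F \<and> (\<forall>e\<in>Cspace S S'. g e \<noteq> 0 \<longrightarrow> (\<exists>y\<in>F. y \<in> fst e)))"

definition cintegral :: "('e \<Rightarrow> nat) \<Rightarrow> ('e \<Rightarrow> real) \<Rightarrow> real" where
  "cintegral \<nu> g = (\<Sum>e\<in>{e. 0 < \<nu> e \<and> g e \<noteq> 0}. real (\<nu> e) * g e)"

definition vague_top :: "'a::group_add set \<Rightarrow> 'b::group_add set
    \<Rightarrow> ((('a \<times> 'b) set \<times> ('a \<times> 'b \<Rightarrow> real)) \<Rightarrow> nat) topology" where
  "vague_top S S' = pullback_topology (Nspace S S')
      (\<lambda>\<nu> g. if test_fun S S' g then cintegral \<nu> g else 0)
      (product_topology (\<lambda>_. euclideanreal) UNIV)"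

definition vague_borel :: "'a::group_add set \<Rightarrow> 'b::group_add set
    \<Rightarrow> ((('a \<times> 'b) set \<times> ('a \<times> 'b \<Rightarrow> real)) \<Rightarrow> nat) measure" where
  "vague_borel S S' = sigma (Nspace S S') {U. openin (vague_top S S') U}"

definition bern_set :: "'a::group_add set \<Rightarrow> 'b::group_add set \<Rightarrow> (nat \<Rightarrow> nat) \<Rightarrow> (nat \<Rightarrow> nat)
    \<Rightarrow> nat \<Rightarrow> ('a \<times> 'b \<Rightarrow> bool) measure" where
  "bern_set S S' f r n = PiM UNIV (\<lambda>_. measure_pmf
      (bernoulli_pmf (1 / real (card (diamond S S' f r n (0, 0))))))"

definition cproc_map :: "'a::group_add set \<Rightarrow> 'b::group_add set \<Rightarrow> (nat \<Rightarrow> nat) \<Rightarrow> (nat \<Rightarrow> nat)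
    \<Rightarrow> nat \<Rightarrow> ('a \<times> 'b \<Rightarrow> bool) \<Rightarrow> ((('a \<times> 'b) set \<times> ('a \<times> 'b \<Rightarrow> real)) \<Rightarrow> nat)" where
  "cproc_map S S' f r n \<Phi> = (\<lambda>e. if \<exists>x. \<Phi> x \<and> e = (diamond S S' f r n x, horo S S' x) then 1 else 0)"

definition law_C :: "'a::group_add set \<Rightarrow> 'b::group_add set \<Rightarrow> (nat \<Rightarrow> nat) \<Rightarrow> (nat \<Rightarrow> nat)
    \<Rightarrow> nat \<Rightarrow> ((('a \<times> 'b) set \<times> ('a \<times> 'b \<Rightarrow> real)) \<Rightarrow> nat) measure" where
  "law_C S S' f r n = distr (bern_set S S' f r n) (vague_borel S S') (cproc_map S S' f r n)"

definition weak_conv_pp :: "'a::group_add set \<Rightarrow> 'b::group_add set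
    \<Rightarrow> (nat \<Rightarrow> ((('a \<times> 'b) set \<times> ('a \<times> 'b \<Rightarrow> real)) \<Rightarrow> nat) measure)
    \<Rightarrow> ((('a \<times> 'b) set \<times> ('a \<times> 'b \<Rightarrow> real)) \<Rightarrow> nat) measure \<Rightarrow> bool" where
  "weak_conv_pp S S' Ps P \<longleftrightarrow> (\<forall>F. continuous_map (vague_top S S') euclideanreal F
      \<and> (\<exists>K. \<forall>\<nu>\<in>Nspace S S'. \<bar>F \<nu>\<bar> \<le> K)
      \<longrightarrow> (\<lambda>k. \<integral>\<nu>. F \<nu> \<partial>(Ps k)) \<longlonglongrightarrow> (\<integral>\<nu>. F \<nu> \<partial>P))"

end

theory Submission
  imports Defs
begin


lemma gens_minus: "s \<in> gens S \<Longrightarrow> - s \<in> gens S"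
  by (auto simp: gens_def)

lemma word_len_ex:
  assumes "generates S"
  shows "\<exists>ws. length ws = word_len S x \<and> set ws \<subseteq> gens S \<and> sum_list ws = x"
proof -
  from assms obtain ws where "set ws \<subseteq> gens S" "sum_list ws = x" unfolding generates_def by blast
  then have "\<exists>n ws. length ws = n \<and> set ws \<subseteq> gens S \<and> sum_list ws = x" by blast
  then show ?thesis unfolding word_len_def by (rule LeastI_ex)
qed

lemma word_len_le:
  assumes "set ws \<subseteq> gens S" "sum_list ws = x"
  shows "word_len S x \<le> length ws"
  unfolding word_len_def using assms by (intro Least_le) blast

lemma word_len_0[simp]: "word_len S 0 = 0"
  using word_len_le[of "[]" S 0] by simp

lemma sum_list_rev_minus: "sum_list (rev (map uminus ws)) = - sum_list (ws :: 'a::group_add list)"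
  by (induction ws) (auto simp: minus_add)

lemma word_len_minus_le:
  assumes "generates S"
  shows "word_len S (- x) \<le> word_len S x"
proof -
  obtain ws where ws: "length ws = word_len S x" "set ws \<subseteq> gens S" "sum_list ws = x"
    using word_len_ex[OF assms] by blast
  have "set (rev (map uminus ws)) \<subseteq> gens S" using ws(2) by (auto simp: gens_minus)
  from word_len_le[OF this] ws show ?thesis by (simp add: sum_list_rev_minus)
qed

lemma word_len_minus[simp]:
  assumes "generates S"
  shows "word_len S (- x) = word_len S x"
  using word_len_minus_le[OF assms, of x] word_len_minus_le[OF assms, of "-x"] by simp

lemma word_len_add:
  assumes "generates S"
  shows "word_len S (x + y) \<le> word_len S x + word_len S y"
proof -
  obtain ws where ws: "length ws = word_len S x" "set ws \<subseteq> gens S" "sum_list ws = x"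
    using word_len_ex[OF assms] by blast
  obtain vs where vs: "length vs = word_len S y" "set vs \<subseteq> gens S" "sum_list vs = y"
    using word_len_ex[OF assms] by blast
  have "word_len S (x + y) \<le> length (ws @ vs)"
    by (rule word_len_le) (use ws vs in auto)
  then show ?thesis using ws vs by simp
qed

lemma word_len_gen: "s \<in> gens S \<Longrightarrow> word_len S s \<le> 1"
  using word_len_le[of "[s]" S s] by simp

lemma wdist_0[simp]: "wdist S 0 x = word_len S x"
  by (simp add: wdist_def)

lemma wdist_refl[simp]: "wdist S x x = 0"
  by (simp add: wdist_def)

lemma wdist_sym:
  assumes "generates S" shows "wdist S x y = wdist S y x"
proof -
  have "- (- x + y) = - y + x" by (simp add: minus_add)
  then show ?thesis unfolding wdist_def using word_len_minus[OF assms, of "- x + y"] by simp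
qed

lemma wdist_triangle:
  assumes "generates S" shows "wdist S x z \<le> wdist S x y + wdist S y z"
proof -
  have "- x + z = (- x + y) + (- y + z)" by (simp add: add.assoc[symmetric])
  then show ?thesis unfolding wdist_def using word_len_add[OF assms, of "- x + y" "- y + z"] by simp
qed

definition ball0 :: "'a::group_add set \<Rightarrow> nat \<Rightarrow> 'a set" where
  "ball0 S n = {x. word_len S x \<le> n}"

lemma ball_vol_ball0: "ball_vol S n = card (ball0 S n)"
  by (simp add: ball_vol_def ball0_def)

lemma finite_ball0:
  assumes "finite S" "generates S"
  shows "finite (ball0 S n)"
proof -
  have fg: "finite (gens S)" using assms(1) by (simp add: gens_def)
  have "ball0 S n \<subseteq> sum_list ` {ws. set ws \<subseteq> gens S \<and> length ws \<le> n}"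
  proof
    fix x assume "x \<in> ball0 S n"
    then have "word_len S x \<le> n" by (simp add: ball0_def)
    moreover obtain ws where ws: "length ws = word_len S x" "set ws \<subseteq> gens S" "sum_list ws = x"
      using word_len_ex[OF assms(2)] by blast
    ultimately show "x \<in> sum_list ` {ws. set ws \<subseteq> gens S \<and> length ws \<le> n}" by force
  qed
  moreover have "finite {ws. set ws \<subseteq> gens S \<and> length ws \<le> n}"
    using finite_lists_length_le[OF fg] by simp
  ultimately show ?thesis by (meson finite_imageI finite_subset)
qed

lemma zero_in_ball0[simp]: "0 \<in> ball0 S n"
  by (simp add: ball0_def)

lemma ball_vol_pos:
  assumes "finite S" "generates S"
  shows "0 < ball_vol S n"
  using finite_ball0[OF assms, of n] zero_in_ball0[of S n] unfolding ball_vol_ball0 card_gt_0_iff by blast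

lemma ball_vol_mono:
  assumes "finite S" "generates S" "m \<le> n"
  shows "ball_vol S m \<le> ball_vol S n"
  unfolding ball_vol_ball0 using finite_ball0[OF assms(1,2)] assms(3)
  by (intro card_mono) (auto simp: ball0_def)

lemma countable_UNIV_gen:
  fixes S :: "'a::group_add set"
  assumes "finite S" "generates S"
  shows "countable (UNIV :: 'a::group_add set)"
proof -
  have "(UNIV :: 'a set) = (\<Union>n. ball0 S n)" by (auto simp: ball0_def)
  moreover have "countable (\<Union>n. ball0 S n)"
    using finite_ball0[OF assms] by (intro countable_UN) (auto intro: countable_finite)
  ultimately show ?thesis by simp
qed

lemma ball_around_sub:
  "{x. wdist S x c \<le> n} \<subseteq> (\<lambda>u. c + - u) ` ball0 S n"
proof
  fix x assume "x \<in> {x. wdist S x c \<le> n}"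
  then have "- x + c \<in> ball0 S n" by (simp add: wdist_def ball0_def)
  moreover have "x = c + - (- x + c)" by (simp add: minus_add add.assoc)
  ultimately show "x \<in> (\<lambda>u. c + - u) ` ball0 S n" by blast
qed

lemma ball_around_finite:
  assumes "finite S" "generates S"
  shows "finite {x. wdist S x c \<le> n}"
  by (rule finite_subset[OF ball_around_sub finite_imageI[OF finite_ball0[OF assms]]])

lemma ball_around_card:
  assumes "finite S" "generates S"
  shows "card {x. wdist S x c \<le> n} \<le> ball_vol S n"
  unfolding ball_vol_ball0
  by (rule order.trans[OF card_mono[OF _ ball_around_sub] card_image_le])
     (use finite_ball0[OF assms] in auto)

lemma ball_vol_submult:
  assumes "finite S" "generates S"
  shows "ball_vol S (a + b) \<le> ball_vol S a * ball_vol S b"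
proof -
  have "ball0 S (a + b) \<subseteq> (\<lambda>(u, v). u + v) ` (ball0 S a \<times> ball0 S b)"
  proof
    fix x assume "x \<in> ball0 S (a + b)"
    then have le: "word_len S x \<le> a + b" by (simp add: ball0_def)
    obtain ws where ws: "length ws = word_len S x" "set ws \<subseteq> gens S" "sum_list ws = x"
      using word_len_ex[OF assms(2)] by blast
    have "word_len S (sum_list (take a ws)) \<le> length (take a ws)"
      by (rule word_len_le) (use ws in \<open>auto dest: in_set_takeD\<close>)
    then have 1: "sum_list (take a ws) \<in> ball0 S a" by (simp add: ball0_def)
    have "word_len S (sum_list (drop a ws)) \<le> length (drop a ws)"
      by (rule word_len_le) (use ws in \<open>auto dest: in_set_dropD\<close>)
    then have 2: "sum_list (drop a ws) \<in> ball0 S b" using le ws(1) by (simp add: ball0_def)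
    have "x = sum_list (take a ws) + sum_list (drop a ws)"
      using ws(3) by (metis append_take_drop_id sum_list_append)
    with 1 2 show "x \<in> (\<lambda>(u, v). u + v) ` (ball0 S a \<times> ball0 S b)" by force
  qed
  then have "card (ball0 S (a + b)) \<le> card ((\<lambda>(u, v). u + v) ` (ball0 S a \<times> ball0 S b))"
    using finite_ball0[OF assms] by (intro card_mono) auto
  also have "\<dots> \<le> card (ball0 S a \<times> ball0 S b)" by (rule card_image_le) (use finite_ball0[OF assms] in auto)
  finally show ?thesis by (simp add: ball_vol_ball0 card_cartesian_product)
qed

lemma sphere_bound:
  assumes "finite S" "generates S" "nonamenable S"
  obtains c where "0 < c" "\<And>a. c * real (ball_vol S a) \<le> real (card {x. word_len S x = a})"
proof -
  obtain \<epsilon> where e: "\<epsilon> > 0" and H: "\<And>F. finite F \<Longrightarrow> F \<noteq> {} \<Longrightarrow>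
      \<epsilon> * real (card F) \<le> real (card {y. y \<notin> F \<and> (\<exists>x\<in>F. \<exists>s\<in>gens S. y = x + s)})"
    using assms(3) unfolding nonamenable_def by blast
  define c where "c = min 1 (\<epsilon> / (1 + \<epsilon>))"
  have "c * real (ball_vol S a) \<le> real (card {x. word_len S x = a})" for a
  proof (cases a)
    case 0
    have "{x. word_len S x = 0} = ball0 S 0" by (auto simp: ball0_def)
    then have "real (card {x. word_len S x = a}) = real (ball_vol S a)" using 0 by (simp add: ball_vol_ball0)
    moreover have "c \<le> 1" by (simp add: c_def)
    ultimately show ?thesis using mult_right_mono[of c 1 "real (ball_vol S a)"] by simp
  next
    case (Suc b)
    let ?F = "ball0 S b" and ?Sp = "{x. word_len S x = a}"
    have fin: "finite ?F" using finite_ball0[OF assms(1,2)] .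
    have bd: "{y. y \<notin> ?F \<and> (\<exists>x\<in>?F. \<exists>s\<in>gens S. y = x + s)} \<subseteq> ?Sp"
    proof safe
      fix x s assume "x + s \<notin> ?F" "x \<in> ?F" "s \<in> gens S"
      then show "word_len S (x + s) = a"
        using word_len_add[OF assms(2), of x s] word_len_gen[of s S] Suc by (auto simp: ball0_def)
    qed
    have finS: "finite ?Sp" using finite_ball0[OF assms(1,2), of a] by (rule rev_finite_subset) (auto simp: ball0_def)
    have "\<epsilon> * real (card ?F) \<le> real (card ?Sp)"
    proof -
      have "ball0 S b \<noteq> {}" using zero_in_ball0[of S b] by blast
      from H[OF fin this] card_mono[OF finS bd] show ?thesis by linarith
    qed
    moreover have "ball0 S a = ?F \<union> ?Sp" "?F \<inter> ?Sp = {}" using Suc by (auto simp: ball0_def)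
    then have "real (ball_vol S a) = real (card ?F) + real (card ?Sp)"
      using fin finS by (simp add: ball_vol_ball0 card_Un_disjoint)
    ultimately have "\<epsilon> * real (ball_vol S a) \<le> (1 + \<epsilon>) * real (card ?Sp)"
      by (simp add: algebra_simps)
    then have "\<epsilon> / (1 + \<epsilon>) * real (ball_vol S a) \<le> real (card ?Sp)"
      using e by (simp add: field_simps)
    moreover have "c \<le> \<epsilon> / (1 + \<epsilon>)" by (simp add: c_def)
    ultimately show ?thesis
      by (meson mult_right_mono of_nat_0_le_iff order_trans)
  qed
  moreover have "c > 0" using e by (simp add: c_def)
  ultimately show ?thesis using that by blast
qed




lemma mem_diamond:
  "y \<in> diamond S S' f r n x \<longleftrightarrow>
    (\<exists>t\<le>r n. wdist S (fst x) (fst y) = r n - t \<and> wdist S' (snd x) (snd y) \<le> f t)"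
  by (cases y) (auto simp: diamond_def)

lemma diamond_bound:
  assumes "mono f" "y \<in> diamond S S' f r n x"
  shows "wdist S (fst x) (fst y) \<le> r n" "wdist S' (snd x) (snd y) \<le> f (r n)"
  using assms by (auto simp: mem_diamond mono_def intro: order.trans)

lemma center_in_diamond: "x \<in> diamond S S' f r n x"
  unfolding mem_diamond by (intro exI[of _ "r n"]) auto

lemma diamond_nonempty: "diamond S S' f r n x \<noteq> {}"
  using center_in_diamond by blast

lemma finite_diamond:
  assumes "finite S" "generates S" "finite S'" "generates S'" "mono f"
  shows "finite (diamond S S' f r n x)"
proof -
  have "diamond S S' f r n x \<subseteq> {u. wdist S u (fst x) \<le> r n} \<times> {u. wdist S' u (snd x) \<le> f (r n)}"
  proof
    fix y assume y: "y \<in> diamond S S' f r n x"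
    show "y \<in> {u. wdist S u (fst x) \<le> r n} \<times> {u. wdist S' u (snd x) \<le> f (r n)}"
      using diamond_bound[OF assms(5) y] wdist_sym[OF assms(2), of "fst y"] wdist_sym[OF assms(4), of "snd y"]
      by (cases y) auto
  qed
  then show ?thesis
    using ball_around_finite[OF assms(1,2)] ball_around_finite[OF assms(3,4)]
    by (meson finite_SigmaI finite_subset)
qed

lemma card_diamond_pos:
  assumes "finite S" "generates S" "finite S'" "generates S'" "mono f"
  shows "0 < card (diamond S S' f r n x)"
  using finite_diamond[OF assms] center_in_diamond[of x S S' f r n] card_gt_0_iff by blast

lemma sphere_finite:
  assumes "finite S" "generates S"
  shows "finite {x. word_len S x = a}"
  using finite_ball0[OF assms, of a] by (rule rev_finite_subset) (auto simp: ball0_def)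

lemma diamond_lower:
  assumes "finite S" "generates S" "finite S'" "generates S'" "mono f" "nonamenable S"
    and "strict_mono r" and A: "0 < A" "\<And>n. A \<le> real (ball_vol S' (f (r n))) / real (ball_vol S (r n))"
  obtains c where "0 < c" "\<And>n. c * real n * real (ball_vol S (r n)) \<le> real (card (diamond S S' f r n (0, 0)))"
proof -
  obtain c where c: "0 < c" "\<And>a. c * real (ball_vol S a) \<le> real (card {x. word_len S x = a})"
    using sphere_bound[OF assms(1,2,6)] by blast
  have "c * A * real n * real (ball_vol S (r n)) \<le> real (card (diamond S S' f r n (0, 0)))" for n
  proof -
    define T where "T j = {u. word_len S u = r n - r j} \<times> ball0 S' (f (r j))" for j
    have finT: "finite (T j)" for j
      unfolding T_def using sphere_finite[OF assms(1,2)] finite_ball0[OF assms(3,4)] by blast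
    have sub: "(\<Union>j<n. T j) \<subseteq> diamond S S' f r n (0, 0)"
    proof
      fix y assume "y \<in> (\<Union>j<n. T j)"
      then obtain j where j: "j < n" "y \<in> T j" by blast
      have "r j \<le> r n" using assms(7) j(1) by (simp add: strict_mono_less_eq)
      then show "y \<in> diamond S S' f r n (0, 0)"
        unfolding mem_diamond using j(2) by (intro exI[of _ "r j"]) (auto simp: T_def ball0_def)
    qed
    have disj: "T i \<inter> T j = {}" if "i < n" "j < n" "i \<noteq> j" for i j
    proof -
      have "r i \<le> r n" "r j \<le> r n" "r i \<noteq> r j"
        using assms(7) that by (auto simp: strict_mono_less_eq strict_mono_eq)
      then have "r n - r i \<noteq> r n - r j" by linarith
      then show ?thesis by (auto simp: T_def)
    qed
    have cardU: "card (\<Union>j<n. T j) = (\<Sum>j<n. card (T j))"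
      by (rule card_UN_disjoint) (use finT disj in auto)
    have each: "c * A * real (ball_vol S (r n)) \<le> real (card (T j))" if "j < n" for j
    proof -
      have rj: "r j \<le> r n" using assms(7) that by (simp add: strict_mono_less_eq)
      have bp: "0 < real (ball_vol S (r j))" using ball_vol_pos[OF assms(1,2)] by simp
      have b': "A * real (ball_vol S (r j)) \<le> real (ball_vol S' (f (r j)))"
        using A(2)[of j] bp by (simp add: field_simps)
      have sm: "real (ball_vol S (r n)) \<le> real (ball_vol S (r n - r j)) * real (ball_vol S (r j))"
        using ball_vol_submult[OF assms(1,2), of "r n - r j" "r j"] rj by (simp flip: of_nat_mult)
      have "c * A * real (ball_vol S (r n)) \<le> c * A * (real (ball_vol S (r n - r j)) * real (ball_vol S (r j)))"
        using sm c(1) A(1) by simp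
      also have "\<dots> = (c * real (ball_vol S (r n - r j))) * (A * real (ball_vol S (r j)))" by simp
      also have "\<dots> \<le> real (card {x. word_len S x = r n - r j}) * real (ball_vol S' (f (r j)))"
        by (intro mult_mono c(2) b') (use c(1) A(1) in auto)
      also have "\<dots> = real (card (T j))"
        by (simp add: T_def card_cartesian_product ball_vol_ball0)
      finally show ?thesis .
    qed
    have "c * A * real n * real (ball_vol S (r n)) = (\<Sum>j<n. c * A * real (ball_vol S (r n)))" by simp
    also have "\<dots> \<le> (\<Sum>j<n. real (card (T j)))" by (intro sum_mono each) auto
    also have "\<dots> = real (card (\<Union>j<n. T j))" using cardU by simp
    also have "\<dots> \<le> real (card (diamond S S' f r n (0, 0)))"
      using card_mono[OF finite_diamond[OF assms(1-5)] sub] by simp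
    finally show ?thesis .
  qed
  then show ?thesis using that[of "c * A"] c(1) A(1) by (simp add: mult.assoc)
qed

lemma bad_card:
  assumes "finite S" "generates S" "finite S'" "generates S'" "mono f"
  shows "card {x. y \<in> diamond S S' f r n x \<and> (word_len S (fst x) < R \<or> word_len S' (snd x) < R)}
     \<le> ball_vol S R * ball_vol S' (f (r n)) + ball_vol S (r n) * ball_vol S' R"
proof -
  let ?B1 = "ball0 S R \<times> {u. wdist S' u (snd y) \<le> f (r n)}"
  let ?B2 = "{u. wdist S u (fst y) \<le> r n} \<times> ball0 S' R"
  have sub: "{x. y \<in> diamond S S' f r n x \<and> (word_len S (fst x) < R \<or> word_len S' (snd x) < R)} \<subseteq> ?B1 \<union> ?B2"
  proof
    fix x assume x: "x \<in> {x. y \<in> diamond S S' f r n x \<and> (word_len S (fst x) < R \<or> word_len S' (snd x) < R)}"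
    then have "y \<in> diamond S S' f r n x" by blast
    from diamond_bound[OF assms(5) this] x show "x \<in> ?B1 \<union> ?B2"
      by (cases x) (auto simp: ball0_def)
  qed
  have f1: "finite ?B1" using finite_ball0[OF assms(1,2)] ball_around_finite[OF assms(3,4)] by blast
  have f2: "finite ?B2" using finite_ball0[OF assms(3,4)] ball_around_finite[OF assms(1,2)] by blast
  have "card (?B1 \<union> ?B2) \<le> card ?B1 + card ?B2" by (rule card_Un_le)
  also have "card ?B1 \<le> ball_vol S R * ball_vol S' (f (r n))"
    by (simp add: card_cartesian_product ball_vol_ball0 ball_around_card[OF assms(3,4), unfolded ball_vol_ball0])
  also have "card ?B2 \<le> ball_vol S (r n) * ball_vol S' R"
    by (simp add: card_cartesian_product ball_vol_ball0 ball_around_card[OF assms(1,2), unfolded ball_vol_ball0])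
  finally show ?thesis using card_mono[OF finite_UnI[OF f1 f2] sub] by linarith
qed




definition N1 :: "'a::group_add set \<Rightarrow> ('a \<times> 'b) set \<Rightarrow> ('a \<times> 'b) set" where
  "N1 S Z = Z \<union> {(a + s, b) | a b s. (a, b) \<in> Z \<and> s \<in> gens S}"

lemma card_fibers:
  assumes "finite Z"
  shows "card Z = (\<Sum>b\<in>snd ` Z. card {a. (a, b) \<in> Z})"
proof -
  have Z: "Z = (\<Union>b\<in>snd ` Z. (\<lambda>a. (a, b)) ` {a. (a, b) \<in> Z})" by force
  have fin: "finite {a. (a, b) \<in> Z}" for b
    using finite_imageI[OF assms, of fst] by (rule rev_finite_subset) force
  have "card Z = (\<Sum>b\<in>snd ` Z. card ((\<lambda>a. (a, b)) ` {a. (a, b) \<in> Z}))"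
    by (subst Z, rule card_UN_disjoint) (use assms fin in auto)
  also have "\<dots> = (\<Sum>b\<in>snd ` Z. card {a. (a, b) \<in> Z})"
    by (intro sum.cong refl card_image) (auto simp: inj_on_def)
  finally show ?thesis .
qed

lemma N1_finite:
  assumes "finite S" "finite Z"
  shows "finite (N1 S Z)"
proof -
  have "N1 S Z \<subseteq> Z \<union> (\<lambda>(p, s). (fst p + s, snd p)) ` (Z \<times> gens S)"
    unfolding N1_def by (auto, force)
  moreover have "finite (gens S)" using assms(1) by (simp add: gens_def)
  ultimately show ?thesis using assms(2) by (meson finite_SigmaI finite_UnI finite_imageI finite_subset)
qed

lemma N1_expand:
  assumes "finite S" "\<epsilon> > 0" and H: "\<And>F. finite F \<Longrightarrow> F \<noteq> {} \<Longrightarrow>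
      \<epsilon> * real (card F) \<le> real (card {y. y \<notin> F \<and> (\<exists>x\<in>F. \<exists>s\<in>gens S. y = x + s)})"
    and "finite Z"
  shows "(1 + \<epsilon>) * real (card Z) \<le> real (card (N1 S Z))"
proof -
  define Fb where "Fb b = {a. (a, b) \<in> Z}" for b
  define Bd where "Bd b = {y. y \<notin> Fb b \<and> (\<exists>x\<in>Fb b. \<exists>s\<in>gens S. y = x + s)}" for b
  have finN: "finite (N1 S Z)" using N1_finite[OF assms(1,4)] .
  have finF: "finite (Fb b)" for b unfolding Fb_def
    using finite_imageI[OF assms(4), of fst] by (rule rev_finite_subset) force
  have fing: "finite (gens S)" using assms(1) by (simp add: gens_def)
  have finB: "finite (Bd b)" for b
  proof -
    have "Bd b \<subseteq> (\<lambda>(x, s). x + s) ` (Fb b \<times> gens S)" by (auto simp: Bd_def)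
    then show ?thesis using finF fing by (meson finite_SigmaI finite_imageI finite_subset)
  qed
  have snd_eq: "snd ` N1 S Z = snd ` Z" by (force simp: N1_def)
  have fib: "{a. (a, b) \<in> N1 S Z} = Fb b \<union> Bd b" for b
    by (auto simp: N1_def Fb_def Bd_def)
  have "(1 + \<epsilon>) * real (card Z) = (\<Sum>b\<in>snd ` Z. (1 + \<epsilon>) * real (card (Fb b)))"
    by (simp add: card_fibers[OF assms(4)] Fb_def sum_distrib_left)
  also have "\<dots> \<le> (\<Sum>b\<in>snd ` Z. real (card (Fb b \<union> Bd b)))"
  proof (rule sum_mono)
    fix b assume "b \<in> snd ` Z"
    then have "Fb b \<noteq> {}" by (force simp: Fb_def)
    from H[OF finF this] have "\<epsilon> * real (card (Fb b)) \<le> real (card (Bd b))" by (simp add: Bd_def)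
    moreover have "card (Fb b \<union> Bd b) = card (Fb b) + card (Bd b)"
      by (rule card_Un_disjoint) (use finF finB in \<open>auto simp: Bd_def\<close>)
    ultimately show "(1 + \<epsilon>) * real (card (Fb b)) \<le> real (card (Fb b \<union> Bd b))"
      by (simp add: algebra_simps)
  qed
  also have "\<dots> = real (card (N1 S Z))"
    by (simp add: card_fibers[OF finN] snd_eq fib)
  finally show ?thesis .
qed

lemma N1_iter:
  assumes "finite S" "\<epsilon> > 0" and H: "\<And>F. finite F \<Longrightarrow> F \<noteq> {} \<Longrightarrow>
      \<epsilon> * real (card F) \<le> real (card {y. y \<notin> F \<and> (\<exists>x\<in>F. \<exists>s\<in>gens S. y = x + s)})"
    and "finite Z"
  shows "finite ((N1 S ^^ R) Z) \<and> (1 + \<epsilon>) ^ R * real (card Z) \<le> real (card ((N1 S ^^ R) Z))"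
proof (induction R)
  case 0 then show ?case using assms(4) by simp
next
  case (Suc R)
  then have fin: "finite ((N1 S ^^ R) Z)" by blast
  have "(1 + \<epsilon>) ^ Suc R * real (card Z) = (1 + \<epsilon>) * ((1 + \<epsilon>) ^ R * real (card Z))" by simp
  also have "\<dots> \<le> (1 + \<epsilon>) * real (card ((N1 S ^^ R) Z))"
    using Suc assms(2) by (intro mult_left_mono) auto
  also have "\<dots> \<le> real (card ((N1 S ^^ Suc R) Z))"
    using N1_expand[OF assms(1,2) H fin] by simp
  finally show ?case using N1_finite[OF assms(1) fin] by simp
qed

lemma N1_iter_mem:
  assumes "generates S"
  shows "z \<in> (N1 S ^^ R) Z \<Longrightarrow> \<exists>a\<in>Z. \<exists>u. word_len S u \<le> R \<and> z = (fst a + u, snd a)"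
proof (induction R arbitrary: z)
  case 0 then show ?case by (intro bexI[of _ z] exI[of _ 0]) auto
next
  case (Suc R)
  then have "z \<in> N1 S ((N1 S ^^ R) Z)" by simp
  then consider "z \<in> (N1 S ^^ R) Z" | a b s where "(a, b) \<in> (N1 S ^^ R) Z" "s \<in> gens S" "z = (a + s, b)"
    unfolding N1_def by blast
  then show ?case
  proof cases
    case 1 then show ?thesis using Suc.IH by (meson le_SucI)
  next
    case 2
    from Suc.IH[OF 2(1)] obtain c u where cu: "c \<in> Z" "word_len S u \<le> R" "(a, b) = (fst c + u, snd c)" by blast
    have "word_len S (u + s) \<le> Suc R"
      using word_len_add[OF assms, of u s] word_len_gen[OF 2(2)] cu(2) by linarith
    moreover have "z = (fst c + (u + s), snd c)" using 2(3) cu(3) by (simp add: add.assoc)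
    ultimately show ?thesis using cu(1) by blast
  qed
qed

definition hitset :: "'a::group_add set \<Rightarrow> 'b::group_add set \<Rightarrow> (nat \<Rightarrow> nat) \<Rightarrow> (nat \<Rightarrow> nat)
   \<Rightarrow> nat \<Rightarrow> nat \<Rightarrow> ('a \<times> 'b) set" where
  "hitset S S' f r n R = {x. \<exists>w. word_len S w \<le> R \<and> (w, 0) \<in> diamond S S' f r n x}"

lemma hitset_finite:
  assumes "finite S" "generates S" "finite S'" "generates S'" "mono f"
  shows "finite (hitset S S' f r n R)"
proof -
  have "hitset S S' f r n R \<subseteq> (\<Union>w\<in>ball0 S R. {u. wdist S u w \<le> r n} \<times> {u. wdist S' u 0 \<le> f (r n)})"
  proof
    fix x assume "x \<in> hitset S S' f r n R"
    then obtain w where w: "word_len S w \<le> R" "(w, 0) \<in> diamond S S' f r n x" by (auto simp: hitset_def)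
    from diamond_bound[OF assms(5) w(2)] w(1) show "x \<in> (\<Union>w\<in>ball0 S R. {u. wdist S u w \<le> r n} \<times> {u. wdist S' u 0 \<le> f (r n)})"
      by (cases x) (auto simp: ball0_def)
  qed
  moreover have "finite (\<Union>w\<in>ball0 S R. {u. wdist S u w \<le> r n} \<times> {u. wdist S' u 0 \<le> f (r n)})"
    using finite_ball0[OF assms(1,2)] ball_around_finite[OF assms(1,2)] ball_around_finite[OF assms(3,4)] by blast
  ultimately show ?thesis by (rule finite_subset)
qed

lemma hitset_card:
  assumes "finite S" "generates S" "finite S'" "generates S'" "mono f" "nonamenable S"
  obtains \<epsilon> where "\<epsilon> > 0" "\<And>n R. (1 + \<epsilon>) ^ R * real (card (diamond S S' f r n (0, 0)))
       \<le> real (card (hitset S S' f r n R))"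
proof -
  obtain \<epsilon> where e: "\<epsilon> > 0" and H: "\<And>F. finite F \<Longrightarrow> F \<noteq> {} \<Longrightarrow>
      \<epsilon> * real (card F) \<le> real (card {y. y \<notin> F \<and> (\<exists>x\<in>F. \<exists>s\<in>gens S. y = x + s)})"
    using assms(6) unfolding nonamenable_def by blast
  have "(1 + \<epsilon>) ^ R * real (card (diamond S S' f r n (0, 0))) \<le> real (card (hitset S S' f r n R))" for n R
  proof -
    let ?D = "diamond S S' f r n (0, 0)"
    let ?Y = "(N1 S ^^ R) ?D"
    have it: "finite ?Y \<and> (1 + \<epsilon>) ^ R * real (card ?D) \<le> real (card ?Y)"
      by (rule N1_iter[OF assms(1) e H finite_diamond[OF assms(1-5)]])
    have inj: "inj_on uminus ?Y" by (auto simp: inj_on_def)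
    have sub: "uminus ` ?Y \<subseteq> hitset S S' f r n R"
    proof
      fix x assume "x \<in> uminus ` ?Y"
      then obtain z where z: "z \<in> ?Y" "x = - z" by blast
      from N1_iter_mem[OF assms(2) z(1)] obtain a u where
        au: "a \<in> ?D" "word_len S u \<le> R" "z = (fst a + u, snd a)" by blast
      have x: "x = (- (fst a + u), - snd a)" using z(2) au(3) by simp
      have "(- u, 0) \<in> diamond S S' f r n x"
      proof -
        from au(1) obtain t where t: "t \<le> r n" "word_len S (fst a) = r n - t" "word_len S' (snd a) \<le> f t"
          by (auto simp: mem_diamond)
        have "- (- (fst a + u)) + - u = fst a" by (simp add: add.assoc)
        moreover have "word_len S' (- (- snd a) + 0) = word_len S' (snd a)" by simp
        ultimately show ?thesis unfolding mem_diamond x using t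
          by (intro exI[of _ t]) (auto simp: wdist_def)
      qed
      moreover have "word_len S (- u) \<le> R" using au(2) word_len_minus[OF assms(2)] by simp
      ultimately show "x \<in> hitset S S' f r n R" by (auto simp: hitset_def)
    qed
    have "card ?Y = card (uminus ` ?Y)" using card_image[OF inj] by simp
    also have "\<dots> \<le> card (hitset S S' f r n R)"
      by (rule card_mono[OF hitset_finite[OF assms(1-5)] sub])
    finally show ?thesis using it by linarith
  qed
  then show ?thesis using that e by blast
qed




lemma bern_prob: "prob_space (bern_set S S' f r n)"
  unfolding bern_set_def by (intro prob_space_PiM prob_space_measure_pmf)

lemma space_bern[simp]: "space (bern_set S S' f r n) = UNIV"
  by (simp add: bern_set_def space_PiM)

lemma bern_avoid:
  fixes X :: "('a::group_add \<times> 'b::group_add) set"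
  assumes "finite X" "0 < card (diamond S S' f r n (0, 0))"
  defines "p \<equiv> 1 / real (card (diamond S S' f r n (0, 0)))"
  shows "{\<Phi>. \<forall>x\<in>X. \<not> \<Phi> x} \<in> sets (bern_set S S' f r n)"
    "measure (bern_set S S' f r n) {\<Phi>. \<forall>x\<in>X. \<not> \<Phi> x} = (1 - p) ^ card X"
proof -
  have p: "0 \<le> p" "p \<le> 1" using assms(2) by (auto simp: p_def)
  let ?M = "\<lambda>_::'a \<times> 'b. measure_pmf (bernoulli_pmf p)"
  have eq: "{\<Phi>. \<forall>x\<in>X. \<not> \<Phi> x} = prod_emb UNIV ?M X (Pi\<^sub>E X (\<lambda>_. {False}))"
    unfolding prod_emb_def by (auto simp: fun_eq_iff restrict_def split: if_splits; metis)
  show "{\<Phi>. \<forall>x\<in>X. \<not> \<Phi> x} \<in> sets (bern_set S S' f r n)"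
    unfolding eq bern_set_def p_def[symmetric] by (rule sets_PiM_I) (use assms(1) in auto)
  have "emeasure (bern_set S S' f r n) {\<Phi>. \<forall>x\<in>X. \<not> \<Phi> x} = (\<Prod>i\<in>X. emeasure (?M i) {False})"
    unfolding eq bern_set_def p_def[symmetric]
    by (rule emeasure_PiM_emb) (use assms(1) in \<open>auto intro: prob_space_measure_pmf\<close>)
  also have "\<dots> = ennreal ((1 - p) ^ card X)"
    using p by (simp add: emeasure_pmf_single ennreal_power)
  finally show "measure (bern_set S S' f r n) {\<Phi>. \<forall>x\<in>X. \<not> \<Phi> x} = (1 - p) ^ card X"
    using p by (simp add: measure_def)
qed

lemma bern_hit:
  fixes X :: "('a::group_add \<times> 'b::group_add) set"
  assumes "finite X" "0 < card (diamond S S' f r n (0, 0))"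
  shows "{\<Phi>. \<exists>x\<in>X. \<Phi> x} \<in> sets (bern_set S S' f r n)"
    "measure (bern_set S S' f r n) {\<Phi>. \<exists>x\<in>X. \<Phi> x} \<le> real (card X) / real (card (diamond S S' f r n (0, 0)))"
proof -
  interpret prob_space "bern_set S S' f r n" by (rule bern_prob)
  define p where "p = 1 / real (card (diamond S S' f r n (0, 0)))"
  have p: "0 \<le> p" "p \<le> 1" using assms(2) by (auto simp: p_def)
  have eq: "{\<Phi>. \<exists>x\<in>X. \<Phi> x} = space (bern_set S S' f r n) - {\<Phi>. \<forall>x\<in>X. \<not> \<Phi> x}" by auto
  note av = bern_avoid[OF assms]
  show "{\<Phi>. \<exists>x\<in>X. \<Phi> x} \<in> sets (bern_set S S' f r n)" unfolding eq by (rule sets.compl_sets[OF av(1)])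
  have "measure (bern_set S S' f r n) {\<Phi>. \<exists>x\<in>X. \<Phi> x} = 1 - (1 - p) ^ card X"
    unfolding eq using prob_compl[OF av(1)] av(2) by (simp add: p_def)
  also have "\<dots> \<le> real (card X) * p"
    using Bernoulli_inequality[of "- p" "card X"] p by simp
  finally show "measure (bern_set S S' f r n) {\<Phi>. \<exists>x\<in>X. \<Phi> x} \<le> real (card X) / real (card (diamond S S' f r n (0, 0)))"
    by (simp add: p_def)
qed

lemma Nspace_vague: "topspace (vague_top S S') = Nspace S S'"
  by (simp add: vague_top_def topspace_pullback_topology)

lemma opens_sub: "{U. openin (vague_top S S') U} \<subseteq> Pow (Nspace S S')"
  using openin_subset[of "vague_top S S'"] Nspace_vague[of S S'] by auto

lemma space_vague_borel[simp]: "space (vague_borel S S') = Nspace S S'"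
  by (simp add: vague_borel_def space_measure_of_conv)

lemma sets_vague_borel: "sets (vague_borel S S') = sigma_sets (Nspace S S') {U. openin (vague_top S S') U}"
  unfolding vague_borel_def by (rule sets_measure_of[OF opens_sub])

lemma open_in_vague_borel: "openin (vague_top S S') U \<Longrightarrow> U \<in> sets (vague_borel S S')"
  unfolding sets_vague_borel by auto

lemma cont_meas:
  assumes "continuous_map (vague_top S S') euclideanreal F"
  shows "F \<in> borel_measurable (vague_borel S S')"
proof (rule borel_measurableI)
  fix U :: "real set" assume "open U"
  then have "openin euclideanreal U" by (simp only: open_openin)
  then have o: "openin (vague_top S S') {x \<in> topspace (vague_top S S'). F x \<in> U}"
    using assms unfolding continuous_map_def by blast
  have "F -` U \<inter> space (vague_borel S S') = {x \<in> topspace (vague_top S S'). F x \<in> U}"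
    by (auto simp: Nspace_vague)
  then show "F -` U \<inter> space (vague_borel S S') \<in> sets (vague_borel S S')"
    using open_in_vague_borel[OF o] by simp
qed

lemma law_sets[simp]: "sets (law_C S S' f r n) = sets (vague_borel S S')"
  by (simp add: law_C_def)

lemma law_space[simp]: "space (law_C S S' f r n) = Nspace S S'"
  by (simp add: law_C_def)

lemma if_in_pair: "(if c then a else b) \<in> {a, b}" by simp

lemma law_emeasure_le:
  "emeasure (law_C S S' f r n) A \<le> emeasure (bern_set S S' f r n) (cproc_map S S' f r n -` A)"
proof -
  have "emeasure (law_C S S' f r n) A \<in> {emeasure (bern_set S S' f r n) (cproc_map S S' f r n -` A \<inter> space (bern_set S S' f r n)), 0}"
    unfolding law_C_def distr_def emeasure_measure_of_conv by (rule if_in_pair)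
  then show ?thesis by auto
qed

lemma law_finite: "finite_measure (law_C S S' f r n)"
proof -
  interpret prob_space "bern_set S S' f r n" by (rule bern_prob)
  have "emeasure (law_C S S' f r n) (space (law_C S S' f r n)) \<le> emeasure (bern_set S S' f r n) (cproc_map S S' f r n -` space (law_C S S' f r n))"
    by (rule law_emeasure_le)
  also have "\<dots> \<le> 1"
    by (cases "cproc_map S S' f r n -` space (law_C S S' f r n) \<in> sets (bern_set S S' f r n)")
       (auto simp: emeasure_notin_sets intro: emeasure_le_1)
  finally show ?thesis by (intro finite_measureI) (auto simp: top_unique)
qed

lemma law_measure_le:
  assumes "E \<in> sets (bern_set S S' f r n)" "cproc_map S S' f r n -` A \<subseteq> E"
  shows "measure (law_C S S' f r n) A \<le> measure (bern_set S S' f r n) E"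
proof -
  interpret prob_space "bern_set S S' f r n" by (rule bern_prob)
  have "emeasure (law_C S S' f r n) A \<le> emeasure (bern_set S S' f r n) E"
  proof (cases "cproc_map S S' f r n -` A \<in> sets (bern_set S S' f r n)")
    case True
    then show ?thesis using law_emeasure_le[of S S' f r n A] emeasure_mono[OF assms(2,1)] by (meson order_trans)
  next
    case False
    then show ?thesis using law_emeasure_le[of S S' f r n A] by (simp add: emeasure_notin_sets)
  qed
  then show ?thesis unfolding measure_def by (intro enn2real_mono) (auto simp: less_top[symmetric])
qed

lemma law_integral_le:
  assumes F: "continuous_map (vague_top S S') euclideanreal F"
    and bnd: "\<And>\<nu>. \<nu> \<in> Nspace S S' \<Longrightarrow> 0 \<le> F \<nu> \<and> F \<nu> \<le> 1"
    and E: "E \<in> sets (bern_set S S' f r n)" "\<And>\<Phi>. F (cproc_map S S' f r n \<Phi>) \<noteq> 0 \<Longrightarrow> \<Phi> \<in> E"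
  shows "(\<integral>\<nu>. F \<nu> \<partial>law_C S S' f r n) \<le> measure (bern_set S S' f r n) E"
proof -
  interpret finite_measure "law_C S S' f r n" by (rule law_finite)
  define V where "V = {\<nu> \<in> topspace (vague_top S S'). F \<nu> \<in> - {0}}"
  have "open (- {0::real})" by (rule open_Compl) (rule closed_singleton)
  then have "openin euclideanreal (- {0::real})" by (simp only: open_openin)
  then have Vo: "openin (vague_top S S') V"
    using F unfolding continuous_map_def V_def by blast
  then have Vs: "V \<in> sets (law_C S S' f r n)" using open_in_vague_borel by simp
  have Fm: "F \<in> borel_measurable (law_C S S' f r n)"
    unfolding measurable_cong_sets[OF law_sets refl] by (rule cont_meas[OF F])
  have "AE \<nu> in law_C S S' f r n. norm (F \<nu>) \<le> 1"
  proof (rule AE_I2)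
    fix \<nu> assume "\<nu> \<in> space (law_C S S' f r n)"
    then have "0 \<le> F \<nu> \<and> F \<nu> \<le> 1" using bnd by simp
    then show "norm (F \<nu>) \<le> 1" by simp
  qed
  then have intF: "integrable (law_C S S' f r n) F"
    by (rule integrable_const_bound[OF _ Fm])
  have VI: "V \<inter> space (law_C S S' f r n) = V" using sets.sets_into_space[OF Vs] by blast
  have intI: "integrable (law_C S S' f r n) (indicator V :: _ \<Rightarrow> real)"
    unfolding integrable_indicator_iff VI using Vs emeasure_finite[of V] by (simp add: less_top[symmetric])
  have "(\<integral>\<nu>. F \<nu> \<partial>law_C S S' f r n) \<le> (\<integral>\<nu>. indicator V \<nu> \<partial>law_C S S' f r n)"
  proof (rule integral_mono[OF intF intI])
    fix \<nu> assume "\<nu> \<in> space (law_C S S' f r n)"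
    then have sp: "\<nu> \<in> Nspace S S'" by simp
    show "F \<nu> \<le> indicator V \<nu>"
    proof (cases "F \<nu> = 0")
      case True then show ?thesis by (simp add: indicator_def)
    next
      case False
      then have "\<nu> \<in> V" using sp by (simp add: V_def Nspace_vague)
      then show ?thesis using bnd[OF sp] by simp
    qed
  qed
  also have "\<dots> = measure (law_C S S' f r n) V" using Bochner_Integration.integral_indicator[of "law_C S S' f r n" V] VI by simp
  also have "\<dots> \<le> measure (bern_set S S' f r n) E"
  proof (rule law_measure_le[OF E(1)])
    show "cproc_map S S' f r n -` V \<subseteq> E"
    proof
      fix \<Phi> assume "\<Phi> \<in> cproc_map S S' f r n -` V"
      then have "F (cproc_map S S' f r n \<Phi>) \<noteq> 0" by (simp add: V_def)
      then show "\<Phi> \<in> E" by (rule E(2))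
    qed
  qed
  finally show ?thesis .
qed




definition ind :: "'c \<Rightarrow> 'c set \<times> 'd \<Rightarrow> real" where
  "ind y e = (if y \<in> fst e then 1 else 0)"

lemma ind_nonneg: "0 \<le> ind y e" and ind_le1: "ind y e \<le> 1"
  by (auto simp: ind_def)

lemma cont_fell_ind: "continuous_map (fell_top :: 'c set topology) euclideanreal (\<lambda>B. if y \<in> B then 1 else 0)"
proof -
  have c1: "continuous_map (fell_top :: 'c set topology) (product_topology (\<lambda>_. discrete_topology UNIV) UNIV) (\<lambda>B y. y \<in> B)"
    unfolding fell_top_def using continuous_map_pullback[OF continuous_map_id] by (simp add: o_def)
  have c2: "continuous_map (product_topology (\<lambda>_::'c. discrete_topology (UNIV :: bool set)) UNIV) (discrete_topology UNIV) (\<lambda>\<phi>. \<phi> y)"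
    using continuous_map_product_projection[of y UNIV "\<lambda>_. discrete_topology (UNIV :: bool set)"] by simp
  have c3: "continuous_map (discrete_topology (UNIV :: bool set)) euclideanreal (\<lambda>b. if b then 1 else 0)"
    by (simp add: continuous_map_from_discrete_topology)
  have "continuous_map (fell_top :: 'c set topology) euclideanreal ((\<lambda>b. if b then 1 else 0) \<circ> ((\<lambda>\<phi>. \<phi> y) \<circ> (\<lambda>B y. y \<in> B)))"
    by (intro continuous_map_compose[OF continuous_map_compose[OF c1 c2] c3])
  then show ?thesis by (simp add: o_def)
qed

lemma cont_ind: "continuous_map (Ctop S S') euclideanreal (ind y)"
proof -
  have "continuous_map (prod_topology fell_top (product_topology (\<lambda>_. euclideanreal) UNIV)) euclideanreal
     ((\<lambda>B. if y \<in> B then 1 else 0) \<circ> fst)"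
    by (rule continuous_map_compose[OF continuous_map_fst cont_fell_ind])
  then have "continuous_map (Ctop S S') euclideanreal ((\<lambda>B. if y \<in> B then 1 else 0) \<circ> fst)"
    unfolding Ctop_def by (rule continuous_map_from_subtopology)
  then show ?thesis by (simp add: o_def ind_def[abs_def])
qed

lemma cont_coord: "continuous_map (Ctop S S') euclideanreal (\<lambda>e. snd e z)"
proof -
  have "continuous_map (prod_topology fell_top (product_topology (\<lambda>_. euclideanreal) UNIV)) euclideanreal
     ((\<lambda>\<theta>. \<theta> z) \<circ> snd)"
    by (rule continuous_map_compose[OF continuous_map_snd continuous_map_product_projection]) simp
  then have "continuous_map (Ctop S S') euclideanreal ((\<lambda>\<theta>. \<theta> z) \<circ> snd)"
    unfolding Ctop_def by (rule continuous_map_from_subtopology)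
  then show ?thesis by (simp add: o_def)
qed

lemma cint_cont:
  assumes "test_fun S S' g"
  shows "continuous_map (vague_top S S') euclideanreal (\<lambda>\<nu>. cintegral \<nu> g)"
proof -
  have "continuous_map (vague_top S S') euclideanreal ((\<lambda>x. x g) \<circ> (\<lambda>\<nu> g. if test_fun S S' g then cintegral \<nu> g else 0))"
    unfolding vague_top_def
    by (rule continuous_map_pullback[OF continuous_map_product_projection]) simp
  then show ?thesis using assms by (simp add: o_def)
qed

lemma cint_nonneg: "(\<And>e. 0 \<le> g e) \<Longrightarrow> 0 \<le> cintegral \<nu> g"
  unfolding cintegral_def by (intro sum_nonneg) auto

lemma cint_ge:
  assumes "finite {e. 0 < \<nu> e \<and> g e \<noteq> 0}" "\<And>e. 0 \<le> g e" "0 < \<nu> e" "g e \<noteq> 0"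
  shows "real (\<nu> e) * g e \<le> cintegral \<nu> g"
  unfolding cintegral_def
  by (rule member_le_sum[where f="\<lambda>e. real (\<nu> e) * g e"]) (use assms in auto)

lemma cint_ge_g:
  assumes "finite {e. 0 < \<nu> e \<and> g e \<noteq> 0}" "\<And>e. 0 \<le> g e" "0 < \<nu> e"
  shows "g e \<le> cintegral \<nu> g"
proof (cases "g e = 0")
  case True then show ?thesis using cint_nonneg[of g \<nu>] assms(2) by simp
next
  case False
  have "g e \<le> real (\<nu> e) * g e" using assms(2)[of e] assms(3)
    by (metis mult_le_cancel_right1 nat_le_real_less of_nat_0 add_0 not_less)
  also have "\<dots> \<le> cintegral \<nu> g" by (rule cint_ge[OF assms(1,2,3) False])
  finally show ?thesis .
qed

lemma cint_nonzero:
  assumes "cintegral \<nu> g \<noteq> 0"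
  shows "\<exists>e. 0 < \<nu> e \<and> g e \<noteq> 0"
proof (rule ccontr)
  assume "\<not> ?thesis"
  then have E: "{e. 0 < \<nu> e \<and> g e \<noteq> 0} = {}" by auto
  have "cintegral \<nu> g = 0" unfolding cintegral_def E by simp
  then show False using assms by simp
qed

lemma Nspace_fin:
  assumes "\<nu> \<in> Nspace S S'" "\<And>e. g e \<noteq> 0 \<Longrightarrow> y \<in> fst e"
  shows "finite {e. 0 < \<nu> e \<and> g e \<noteq> 0}"
proof -
  have "finite {e. 0 < \<nu> e \<and> y \<in> fst e}" using assms(1) unfolding Nspace_def by blast
  then show ?thesis by (rule rev_finite_subset) (use assms(2) in auto)
qed

lemma cproc_pos: "0 < cproc_map S S' f r n \<Phi> e \<longleftrightarrow> (\<exists>x. \<Phi> x \<and> e = (diamond S S' f r n x, horo S S' x))"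
  by (simp add: cproc_map_def)




locale setting =
  fixes S :: "'a::group_add set" and S' :: "'b::group_add set" and f r :: "nat \<Rightarrow> nat"
  assumes fS: "finite S" and gS: "generates S" and fS': "finite S'" and gS': "generates S'"
    and monof: "mono f" and nonam: "nonamenable S" and smr: "strict_mono r"
begin

lemmas base = fS gS fS' gS' monof

abbreviation "D \<equiv> diamond S S' f r"
abbreviation "cproc \<equiv> cproc_map S S' f r"

lemma Dcard_pos: "0 < card (D n (0, 0))"
  by (rule card_diamond_pos[OF base])

definition WR :: "nat \<Rightarrow> ('a \<times> 'b) set" where
  "WR R = (\<lambda>u. (u, 0)) ` ball0 S R"

lemma WR_finite: "finite (WR R)"
  unfolding WR_def using finite_ball0[OF fS gS] by blast

definition gA :: "nat \<Rightarrow> ('a \<times> 'b) set \<times> ('a \<times> 'b \<Rightarrow> real) \<Rightarrow> real" where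
  "gA R e = min 1 (\<Sum>w\<in>WR R. ind w e)"

lemma gA_nonneg: "0 \<le> gA R e"
  unfolding gA_def by (auto intro: sum_nonneg simp: ind_nonneg)

lemma gA_supp: "gA R e \<noteq> 0 \<Longrightarrow> \<exists>w\<in>WR R. w \<in> fst e"
proof (rule ccontr)
  assume "gA R e \<noteq> 0" "\<not> (\<exists>w\<in>WR R. w \<in> fst e)"
  then have "(\<Sum>w\<in>WR R. ind w e) = 0" by (auto simp: ind_def)
  then show False using \<open>gA R e \<noteq> 0\<close> by (simp add: gA_def)
qed

lemma gA_one: "w \<in> WR R \<Longrightarrow> w \<in> fst e \<Longrightarrow> gA R e = 1"
proof -
  assume w: "w \<in> WR R" "w \<in> fst e"
  have "1 = ind w e" using w by (simp add: ind_def)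
  also have "\<dots> \<le> (\<Sum>w\<in>WR R. ind w e)"
    by (rule member_le_sum) (use w WR_finite in \<open>auto simp: ind_nonneg\<close>)
  finally show ?thesis by (simp add: gA_def)
qed

lemma gA_test: "test_fun S S' (gA R)"
  unfolding test_fun_def
proof
  show "continuous_map (Ctop S S') euclideanreal (gA R)"
    unfolding gA_def[abs_def]
    by (intro continuous_intros cont_ind WR_finite)
  show "\<exists>F. finite F \<and> (\<forall>e\<in>Cspace S S'. gA R e \<noteq> 0 \<longrightarrow> (\<exists>y\<in>F. y \<in> fst e))"
    using gA_supp WR_finite by blast
qed

definition FA :: "nat \<Rightarrow> ((('a \<times> 'b) set \<times> ('a \<times> 'b \<Rightarrow> real)) \<Rightarrow> nat) \<Rightarrow> real" where
  "FA R \<nu> = max 0 (1 - cintegral \<nu> (gA R))"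

lemma FA_cont: "continuous_map (vague_top S S') euclideanreal (FA R)"
  unfolding FA_def[abs_def]
  by (intro continuous_intros cint_cont[OF gA_test])

lemma FA_bnd: "0 \<le> FA R \<nu> \<and> FA R \<nu> \<le> 1"
  using cint_nonneg[of "gA R" \<nu>, OF gA_nonneg] by (auto simp: FA_def)

lemma FA_zero: "FA R (\<lambda>_. 0) = 1"
  by (simp add: FA_def cintegral_def)

lemma avoid_bound:
  fixes p :: real
  assumes "0 \<le> p" "p \<le> 1"
  shows "(1 - p) ^ N * (1 + real N * p) \<le> 1"
proof -
  have "1 + real N * p \<le> (1 + p) ^ N" using Bernoulli_inequality[of p N] assms by simp
  then have "(1 - p) ^ N * (1 + real N * p) \<le> (1 - p) ^ N * (1 + p) ^ N"
    using assms by (intro mult_left_mono) auto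
  also have "\<dots> = (1 - p * p) ^ N" by (simp add: power_mult_distrib[symmetric] algebra_simps)
  also have "\<dots> \<le> 1" using assms by (intro power_le_one) (auto simp: mult_le_one)
  finally show ?thesis .
qed

lemma FA_law:
  obtains \<epsilon> :: real where "\<epsilon> > 0" "\<And>n R. (\<integral>\<nu>. FA R \<nu> \<partial>law_C S S' f r n) \<le> 1 / (1 + (1 + \<epsilon>) ^ R)"
proof -
  obtain \<epsilon> where e: "\<epsilon> > 0" and hc: "\<And>n R. (1 + \<epsilon>) ^ R * real (card (D n (0, 0)))
       \<le> real (card (hitset S S' f r n R))"
    using hitset_card[OF base nonam] by blast
  have "(\<integral>\<nu>. FA R \<nu> \<partial>law_C S S' f r n) \<le> 1 / (1 + (1 + \<epsilon>) ^ R)" for n R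
  proof -
    let ?X = "hitset S S' f r n R"
    define p where "p = 1 / real (card (D n (0, 0)))"
    have p: "0 < p" "p \<le> 1" using Dcard_pos[of n] by (auto simp: p_def)
    have finX: "finite ?X" by (rule hitset_finite[OF base])
    have "(\<integral>\<nu>. FA R \<nu> \<partial>law_C S S' f r n) \<le> measure (bern_set S S' f r n) {\<Phi>. \<forall>x\<in>?X. \<not> \<Phi> x}"
    proof (rule law_integral_le[OF FA_cont])
      show "\<And>\<nu>. \<nu> \<in> Nspace S S' \<Longrightarrow> 0 \<le> FA R \<nu> \<and> FA R \<nu> \<le> 1" using FA_bnd by blast
      show "{\<Phi>. \<forall>x\<in>?X. \<not> \<Phi> x} \<in> sets (bern_set S S' f r n)"
        by (rule bern_avoid(1)[OF finX Dcard_pos])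
      fix \<Phi> assume nz: "FA R (cproc n \<Phi>) \<noteq> 0"
      show "\<Phi> \<in> {\<Phi>. \<forall>x\<in>?X. \<not> \<Phi> x}"
      proof (rule ccontr)
        assume "\<Phi> \<notin> {\<Phi>. \<forall>x\<in>?X. \<not> \<Phi> x}"
        then obtain x where x: "x \<in> ?X" "\<Phi> x" by blast
        then obtain w where w: "word_len S w \<le> R" "(w, 0) \<in> D n x" by (auto simp: hitset_def)
        let ?e = "(D n x, horo S S' x)"
        have pos: "0 < cproc n \<Phi> ?e" unfolding cproc_pos using x(2) by blast
        have wW: "(w, 0) \<in> WR R" using w(1) by (auto simp: WR_def ball0_def)
        have fin: "finite {e. 0 < cproc n \<Phi> e \<and> gA R e \<noteq> 0}"
        proof (rule finite_subset[OF _ finite_imageI[OF finX, of "\<lambda>x. (D n x, horo S S' x)"]])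
          show "{e. 0 < cproc n \<Phi> e \<and> gA R e \<noteq> 0} \<subseteq> (\<lambda>x. (D n x, horo S S' x)) ` ?X"
          proof
            fix e assume "e \<in> {e. 0 < cproc n \<Phi> e \<and> gA R e \<noteq> 0}"
            then obtain y where y: "\<Phi> y" "e = (D n y, horo S S' y)" "gA R e \<noteq> 0"
              by (auto simp: cproc_pos)
            from gA_supp[OF y(3)] obtain v where "v \<in> WR R" "v \<in> fst e" by blast
            then have "y \<in> ?X" using y(2) by (auto simp: WR_def hitset_def ball0_def)
            then show "e \<in> (\<lambda>x. (D n x, horo S S' x)) ` ?X" using y(2) by blast
          qed
        qed
        have "gA R ?e \<le> cintegral (cproc n \<Phi>) (gA R)"
          by (rule cint_ge_g[OF fin gA_nonneg pos])
        moreover have "gA R ?e = 1" by (rule gA_one[OF wW]) (use w(2) in simp)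
        ultimately have "FA R (cproc n \<Phi>) = 0" by (simp add: FA_def)
        then show False using nz by simp
      qed
    qed
    also have "\<dots> = (1 - p) ^ card ?X" using bern_avoid(2)[OF finX Dcard_pos] by (simp add: p_def)
    also have "\<dots> \<le> 1 / (1 + (1 + \<epsilon>) ^ R)"
    proof -
      have "(1 + \<epsilon>) ^ R \<le> real (card ?X) * p"
        using hc[of R n] Dcard_pos[of n] by (simp add: p_def field_simps)
      moreover have "(1 - p) ^ card ?X * (1 + real (card ?X) * p) \<le> 1" by (rule avoid_bound) (use p in auto)
      moreover have "0 \<le> (1 - p) ^ card ?X" using p by simp
      ultimately have "(1 - p) ^ card ?X * (1 + (1 + \<epsilon>) ^ R) \<le> 1"
        by (smt (verit, ccfv_SIG) mult_left_mono)
      moreover have "0 < 1 + (1 + \<epsilon>) ^ R" using e by (simp add: add_pos_nonneg)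
      ultimately show ?thesis by (simp add: field_simps)
    qed
    finally show ?thesis .
  qed
  then show ?thesis using that e by blast
qed

end




locale setting2 = setting S S' f r for S :: "'a::group_add set" and S' :: "'b::group_add set" and f r +
  fixes A B :: real
  assumes Apos: "0 < A" and ratio: "\<And>n. A \<le> real (ball_vol S' (f (r n))) / real (ball_vol S (r n))
      \<and> real (ball_vol S' (f (r n))) / real (ball_vol S (r n)) \<le> B"
begin

lemma countable_prod: "countable (UNIV :: ('a \<times> 'b) set)"
proof -
  have "(UNIV :: ('a \<times> 'b) set) = UNIV \<times> UNIV" by simp
  then show ?thesis using countable_UNIV_gen[OF fS gS] countable_UNIV_gen[OF fS' gS']
    by (metis countable_SIGMA)
qed

definition yen :: "nat \<Rightarrow> 'a \<times> 'b" where "yen = from_nat_into UNIV"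

lemma yen_surj: "\<exists>j. yen j = y"
  unfolding yen_def using from_nat_into_surj[OF countable_prod] by blast

definition dl :: "(bool \<times> rat) list \<Rightarrow> ('a \<times> 'b) set \<times> ('a \<times> 'b \<Rightarrow> real) \<Rightarrow> real" where
  "dl L e = (\<Sum>i<length L. \<bar>ind (yen i) e - (if fst (L!i) then 1 else 0)\<bar> + \<bar>snd e (yen i) - real_of_rat (snd (L!i))\<bar>)"

definition gB :: "nat \<Rightarrow> nat \<Rightarrow> (bool \<times> rat) list \<Rightarrow> ('a \<times> 'b) set \<times> ('a \<times> 'b \<Rightarrow> real) \<Rightarrow> real" where
  "gB j R L e = ind (yen j) e * max 0 (1 - real (Suc R) * dl L e)"

lemma gB_nonneg: "0 \<le> gB j R L e"
  unfolding gB_def by (simp add: ind_nonneg)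

lemma gB_supp: "gB j R L e \<noteq> 0 \<Longrightarrow> yen j \<in> fst e \<and> dl L e < 1 / real (Suc R)"
  by (auto simp: gB_def ind_def field_simps split: if_splits)

lemma gB_test: "test_fun S S' (gB j R L)"
  unfolding test_fun_def
proof
  show "continuous_map (Ctop S S') euclideanreal (gB j R L)"
    unfolding gB_def[abs_def] dl_def
    by (intro continuous_intros cont_ind cont_coord) auto
  show "\<exists>F. finite F \<and> (\<forall>e\<in>Cspace S S'. gB j R L e \<noteq> 0 \<longrightarrow> (\<exists>y\<in>F. y \<in> fst e))"
    using gB_supp by (intro exI[of _ "{yen j}"]) auto
qed

definition FB :: "nat \<Rightarrow> nat \<Rightarrow> (bool \<times> rat) list \<Rightarrow> ((('a \<times> 'b) set \<times> ('a \<times> 'b \<Rightarrow> real)) \<Rightarrow> nat) \<Rightarrow> real" where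
  "FB j R L \<nu> = min 1 (cintegral \<nu> (gB j R L))"

lemma FB_cont: "continuous_map (vague_top S S') euclideanreal (FB j R L)"
  unfolding FB_def[abs_def]
  by (intro continuous_intros cint_cont[OF gB_test])

lemma FB_bnd: "0 \<le> FB j R L \<nu> \<and> FB j R L \<nu> \<le> 1"
  using cint_nonneg[of "gB j R L" \<nu>, OF gB_nonneg] by (auto simp: FB_def)

definition H :: "nat \<Rightarrow> nat \<Rightarrow> (bool \<times> rat) list \<Rightarrow> bool" where
  "H j R L \<longleftrightarrow> \<not> (\<exists>m x. R \<le> m \<and> R \<le> word_len S (fst x) \<and> R \<le> word_len S' (snd x)
       \<and> yen j \<in> D m x \<and> dl L (D m x, horo S S' x) < 1 / real (Suc R))"

lemma FB_law1:
  assumes "H j R L" "R \<le> n"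
  shows "(\<integral>\<nu>. FB j R L \<nu> \<partial>law_C S S' f r n) \<le>
     real (card {x. yen j \<in> D n x \<and> (word_len S (fst x) < R \<or> word_len S' (snd x) < R)}) / real (card (D n (0, 0)))"
proof -
  let ?X = "{x. yen j \<in> D n x \<and> (word_len S (fst x) < R \<or> word_len S' (snd x) < R)}"
  have finX: "finite ?X"
  proof -
    have "?X \<subseteq> {x. yen j \<in> D n x}" by blast
    moreover have "{x. yen j \<in> D n x} \<subseteq> {u. wdist S u (fst (yen j)) \<le> r n} \<times> {u. wdist S' u (snd (yen j)) \<le> f (r n)}"
    proof
      fix x assume "x \<in> {x. yen j \<in> D n x}"
      then have "yen j \<in> D n x" by simp
      from diamond_bound[OF monof this] show "x \<in> {u. wdist S u (fst (yen j)) \<le> r n} \<times> {u. wdist S' u (snd (yen j)) \<le> f (r n)}"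
        by (cases x) auto
    qed
    moreover have "finite ({u. wdist S u (fst (yen j)) \<le> r n} \<times> {u. wdist S' u (snd (yen j)) \<le> f (r n)})"
      using ball_around_finite[OF fS gS] ball_around_finite[OF fS' gS'] by blast
    ultimately show ?thesis by (meson finite_subset)
  qed
  have "(\<integral>\<nu>. FB j R L \<nu> \<partial>law_C S S' f r n) \<le> measure (bern_set S S' f r n) {\<Phi>. \<exists>x\<in>?X. \<Phi> x}"
  proof (rule law_integral_le[OF FB_cont])
    show "\<And>\<nu>. \<nu> \<in> Nspace S S' \<Longrightarrow> 0 \<le> FB j R L \<nu> \<and> FB j R L \<nu> \<le> 1" using FB_bnd by blast
    show "{\<Phi>. \<exists>x\<in>?X. \<Phi> x} \<in> sets (bern_set S S' f r n)"
      by (rule bern_hit(1)[OF finX Dcard_pos])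
    fix \<Phi> assume nz: "FB j R L (cproc n \<Phi>) \<noteq> 0"
    then have "cintegral (cproc n \<Phi>) (gB j R L) \<noteq> 0" by (auto simp: FB_def)
    from cint_nonzero[OF this] obtain e where e: "0 < cproc n \<Phi> e" "gB j R L e \<noteq> 0" by blast
    from e(1) obtain x where x: "\<Phi> x" "e = (D n x, horo S S' x)" by (auto simp: cproc_pos)
    from gB_supp[OF e(2)] x(2) have "yen j \<in> D n x" "dl L (D n x, horo S S' x) < 1 / real (Suc R)" by auto
    moreover have "\<not> (R \<le> n \<and> R \<le> word_len S (fst x) \<and> R \<le> word_len S' (snd x) \<and> yen j \<in> D n x
       \<and> dl L (D n x, horo S S' x) < 1 / real (Suc R))" using assms(1) unfolding H_def by blast
    ultimately have "x \<in> ?X" using assms(2) by (auto simp: not_le)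
    then show "\<Phi> \<in> {\<Phi>. \<exists>x\<in>?X. \<Phi> x}" using x(1) by blast
  qed
  also have "\<dots> \<le> real (card ?X) / real (card (D n (0, 0)))"
    by (rule bern_hit(2)[OF finX Dcard_pos])
  finally show ?thesis .
qed

lemma FB_law:
  assumes "H j R L"
  obtains C where "\<And>n. R \<le> n \<Longrightarrow> 1 \<le> n \<Longrightarrow> (\<integral>\<nu>. FB j R L \<nu> \<partial>law_C S S' f r n) \<le> C / real n"
proof -
  obtain c where c: "0 < c" "\<And>n. c * real n * real (ball_vol S (r n)) \<le> real (card (D n (0, 0)))"
    using diamond_lower[OF base nonam smr Apos] ratio by blast
  define C where "C = (real (ball_vol S R) * B + real (ball_vol S' R)) / c"
  have "(\<integral>\<nu>. FB j R L \<nu> \<partial>law_C S S' f r n) \<le> C / real n" if n: "R \<le> n" "1 \<le> n" for n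
  proof -
    let ?X = "{x. yen j \<in> D n x \<and> (word_len S (fst x) < R \<or> word_len S' (snd x) < R)}"
    have vp: "0 < real (ball_vol S (r n))" using ball_vol_pos[OF fS gS] by simp
    have Bn: "real (ball_vol S' (f (r n))) \<le> B * real (ball_vol S (r n))"
      using ratio[of n] vp by (simp add: field_simps)
    have "real (card ?X) \<le> real (ball_vol S R * ball_vol S' (f (r n)) + ball_vol S (r n) * ball_vol S' R)"
      using bad_card[OF base, of "yen j" r n R] by linarith
    also have "\<dots> = real (ball_vol S R) * real (ball_vol S' (f (r n))) + real (ball_vol S (r n)) * real (ball_vol S' R)"
      by simp
    also have "\<dots> \<le> real (ball_vol S R) * (B * real (ball_vol S (r n))) + real (ball_vol S (r n)) * real (ball_vol S' R)"
      using Bn by (intro add_right_mono mult_left_mono) auto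
    also have "\<dots> = c * C * real (ball_vol S (r n))" using c(1) by (simp add: C_def field_simps)
    finally have X: "real (card ?X) \<le> c * C * real (ball_vol S (r n))" .
    have Dp: "0 < real (card (D n (0, 0)))" using Dcard_pos by simp
    have "real (card ?X) / real (card (D n (0, 0))) \<le> C / real n"
    proof -
      have "real (card ?X) * real n \<le> c * C * real (ball_vol S (r n)) * real n"
        using X by (intro mult_right_mono) auto
      also have "\<dots> = C * (c * real n * real (ball_vol S (r n)))" by simp
      also have "\<dots> \<le> C * real (card (D n (0, 0)))"
      proof (rule mult_left_mono[OF c(2)])
        have "0 \<le> real (card ?X)" by simp
        then have "0 \<le> c * C * real (ball_vol S (r n))" using X by linarith
        then show "0 \<le> C" using c(1) vp by (simp add: zero_le_mult_iff)
      qed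
      finally show ?thesis using Dp n by (simp add: field_simps)
    qed
    then show ?thesis using FB_law1[OF assms n(1)] by linarith
  qed
  then show ?thesis using that by blast
qed

end




lemma limitin_pullback_UNIV:
  assumes "limitin T (\<lambda>k. \<phi> (a k)) (\<phi> l) F"
  shows "limitin (pullback_topology UNIV \<phi> T) a l F"
  unfolding limitin_def
proof (intro conjI allI impI)
  show "l \<in> topspace (pullback_topology UNIV \<phi> T)"
    using assms by (simp add: topspace_pullback_topology limitin_def)
  fix U assume U: "openin (pullback_topology UNIV \<phi> T) U \<and> l \<in> U"
  then obtain V where V: "openin T V" "U = \<phi> -` V \<inter> UNIV" by (auto simp: openin_pullback_topology)
  then have "\<phi> l \<in> V" using U by auto
  then have "\<forall>\<^sub>F k in F. \<phi> (a k) \<in> V" using assms V(1) by (simp add: limitin_def)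
  then show "\<forall>\<^sub>F k in F. a k \<in> U" using V(2) by (auto elim: eventually_mono)
qed

lemma tendsto_bound_aux:
  fixes a :: "nat \<Rightarrow> real"
  assumes "\<And>k. i < k \<Longrightarrow> \<bar>a k - l\<bar> < 2 / real (Suc k)"
  shows "a \<longlonglongrightarrow> l"
proof (rule tendsto_sandwich[where f="\<lambda>k. l - 2 / real (Suc k)" and h="\<lambda>k. l + 2 / real (Suc k)"])
  have ev: "\<forall>\<^sub>F k in sequentially. i < k" by (rule eventually_gt_at_top)
  show "\<forall>\<^sub>F k in sequentially. l - 2 / real (Suc k) \<le> a k"
    using ev by (rule eventually_mono) (use assms in force)
  show "\<forall>\<^sub>F k in sequentially. a k \<le> l + 2 / real (Suc k)"
    using ev by (rule eventually_mono) (use assms in force)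
  have z: "(\<lambda>k. 2 / real (Suc k)) \<longlonglongrightarrow> 0"
    using LIMSEQ_Suc[OF lim_const_over_n[of 2]] by simp
  show "(\<lambda>k. l - 2 / real (Suc k)) \<longlonglongrightarrow> l" using tendsto_diff[OF tendsto_const z] by simp
  show "(\<lambda>k. l + 2 / real (Suc k)) \<longlonglongrightarrow> l" using tendsto_add[OF tendsto_const z] by simp
qed

context setting2
begin

lemma horo_in_comp: "horo S S' x \<in> horo_comp S S'"
  unfolding horo_comp_def
  by (rule subsetD[OF closure_of_subset]) (auto simp: topspace_product_topology)

lemma limit_criterion:
  assumes e: "e \<in> Cspace S S'"
    and H: "\<And>k i. i < k \<Longrightarrow> (yen i \<in> D (m k) (x k) \<longleftrightarrow> yen i \<in> fst e)
         \<and> \<bar>horo S S' (x k) (yen i) - snd e (yen i)\<bar> < 2 / real (Suc k)"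
  shows "limitin (Ctop S S') (\<lambda>k. (D (m k) (x k), horo S S' (x k))) e sequentially"
  unfolding Ctop_def limitin_subtopology
proof (intro conjI)
  show "e \<in> Cspace S S'" by (rule e)
  show "\<forall>\<^sub>F k in sequentially. (D (m k) (x k), horo S S' (x k)) \<in> Cspace S S'"
    by (intro always_eventually allI) (simp add: Cspace_def diamond_nonempty horo_in_comp)
  show "limitin (prod_topology fell_top (product_topology (\<lambda>_. euclideanreal) UNIV))
     (\<lambda>k. (D (m k) (x k), horo S S' (x k))) e sequentially"
    unfolding limitin_pairwise
  proof
    show "limitin fell_top (fst \<circ> (\<lambda>k. (D (m k) (x k), horo S S' (x k)))) (fst e) sequentially"
      unfolding fell_top_def o_def fst_conv
    proof (rule limitin_pullback_UNIV)
      show "limitin (product_topology (\<lambda>_. discrete_topology UNIV) UNIV)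
          (\<lambda>k y. y \<in> D (m k) (x k)) (\<lambda>y. y \<in> fst e) sequentially"
        unfolding limitin_componentwise
      proof (intro conjI ballI)
        fix y :: "'a \<times> 'b"
        obtain i where i: "yen i = y" using yen_surj by blast
        show "limitin (discrete_topology UNIV) (\<lambda>k. y \<in> D (m k) (x k)) (y \<in> fst e) sequentially"
        proof (rule limitin_eventually)
          show "\<forall>\<^sub>F k in sequentially. (y \<in> D (m k) (x k)) = (y \<in> fst e)"
            using eventually_gt_at_top[of i] by (rule eventually_mono) (use H i in blast)
        qed simp
      qed (auto simp: topspace_product_topology)
    qed
    show "limitin (product_topology (\<lambda>_. euclideanreal) UNIV) (snd \<circ> (\<lambda>k. (D (m k) (x k), horo S S' (x k)))) (snd e) sequentially"
      unfolding limitin_componentwise o_def snd_conv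
    proof (intro conjI ballI)
      fix y :: "'a \<times> 'b"
      obtain i where i: "yen i = y" using yen_surj by blast
      have "(\<lambda>k. horo S S' (x k) y) \<longlonglongrightarrow> snd e y"
        by (rule tendsto_bound_aux[of i]) (use H i in blast)
      then show "limitin euclideanreal (\<lambda>k. horo S S' (x k) y) (snd e y) sequentially"
        by (simp add: limitin_canonical_iff)
    qed (auto simp: topspace_product_topology)
  qed
qed

end




lemma rat_approx: "0 < (\<rho>::real) \<Longrightarrow> \<exists>q::rat. \<bar>z - real_of_rat q\<bar> < \<rho>"
proof -
  assume "0 < \<rho>"
  then obtain t where t: "t \<in> \<rat>" "z - \<rho> < t" "t < z + \<rho>" using Rats_dense_in_real[of "z - \<rho>" "z + \<rho>"] by auto
  from t(1) obtain q where "t = real_of_rat q" by (auto elim: Rats_cases)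
  then show ?thesis using t by (intro exI[of _ q]) auto
qed

context setting2
begin

lemma dl_term_le:
  assumes "i < length L"
  shows "\<bar>ind (yen i) e - (if fst (L!i) then 1 else 0)\<bar> + \<bar>snd e (yen i) - real_of_rat (snd (L!i))\<bar> \<le> dl L e"
  unfolding dl_def
  by (rule member_le_sum[where f="\<lambda>i. \<bar>ind (yen i) e - (if fst (L!i) then 1 else 0)\<bar> + \<bar>snd e (yen i) - real_of_rat (snd (L!i))\<bar>"])
     (use assms in auto)

lemma step_R:
  assumes nu: "\<nu> \<in> Nspace S S'" and G: "\<And>j R L. H j R L \<Longrightarrow> FB j R L \<nu> = 0"
    and pos: "0 < \<nu> e" and y: "yen j \<in> fst e"
  shows "\<exists>m x. R \<le> m \<and> R \<le> word_len S (fst x) \<and> R \<le> word_len S' (snd x) \<and>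
     (\<forall>i<R. (yen i \<in> D m x \<longleftrightarrow> yen i \<in> fst e) \<and> \<bar>horo S S' x (yen i) - snd e (yen i)\<bar> < 2 / real (Suc R))"
proof -
  define \<rho> where "\<rho> = 1 / (2 * real (Suc R) ^ 2)"
  have \<rho>: "0 < \<rho>" by (simp add: \<rho>_def)
  have "\<forall>i. \<exists>q::rat. \<bar>snd e (yen i) - real_of_rat q\<bar> < \<rho>" using rat_approx[OF \<rho>] by blast
  then obtain q where q: "\<And>i. \<bar>snd e (yen i) - real_of_rat (q i)\<bar> < \<rho>" by metis
  define L where "L = map (\<lambda>i. (yen i \<in> fst e, q i)) [0..<R]"
  have lenL: "length L = R" by (simp add: L_def)
  have Li: "\<And>i. i < R \<Longrightarrow> L ! i = (yen i \<in> fst e, q i)" by (simp add: L_def)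
  have "dl L e = (\<Sum>i<R. \<bar>snd e (yen i) - real_of_rat (q i)\<bar>)"
    unfolding dl_def lenL by (intro sum.cong refl) (simp add: Li ind_def)
  also have "\<dots> \<le> (\<Sum>i<R. \<rho>)" by (intro sum_mono) (use q in \<open>auto intro: less_imp_le\<close>)
  also have "\<dots> = real R * \<rho>" by simp
  also have "\<dots> \<le> real (Suc R) * \<rho>" by (intro mult_right_mono) (use \<rho> in auto)
  also have "real (Suc R) * \<rho> = 1 / (2 * real (Suc R))" by (simp add: \<rho>_def power2_eq_square)
  also have "\<dots> < 1 / real (Suc R)" by (rule divide_strict_left_mono) auto
  finally have dle: "dl L e < 1 / real (Suc R)" .
  have gpos: "0 < gB j R L e"
  proof -
    have "real (Suc R) * dl L e < 1" using dle by (simp add: field_simps)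
    then show ?thesis using y by (simp add: gB_def ind_def)
  qed
  have notH: "\<not> H j R L"
  proof
    assume h: "H j R L"
    have fin: "finite {e. 0 < \<nu> e \<and> gB j R L e \<noteq> 0}"
      by (rule Nspace_fin[OF nu]) (use gB_supp in blast)
    have "gB j R L e \<le> cintegral \<nu> (gB j R L)" by (rule cint_ge_g[OF fin gB_nonneg pos])
    moreover have "cintegral \<nu> (gB j R L) = 0"
      using G[OF h] cint_nonneg[of "gB j R L" \<nu>, OF gB_nonneg] by (auto simp: FB_def min_def split: if_splits)
    ultimately show False using gpos by simp
  qed
  then obtain m x where mx: "R \<le> m" "R \<le> word_len S (fst x)" "R \<le> word_len S' (snd x)"
    "dl L (D m x, horo S S' x) < 1 / real (Suc R)"
    unfolding H_def by blast
  have "(yen i \<in> D m x \<longleftrightarrow> yen i \<in> fst e) \<and> \<bar>horo S S' x (yen i) - snd e (yen i)\<bar> < 2 / real (Suc R)"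
    if i: "i < R" for i
  proof -
    have t: "\<bar>ind (yen i) (D m x, horo S S' x) - (if yen i \<in> fst e then 1 else 0)\<bar>
       + \<bar>horo S S' x (yen i) - real_of_rat (q i)\<bar> < 1 / real (Suc R)"
      using dl_term_le[of i L "(D m x, horo S S' x)"] mx(4) i lenL Li[OF i] by simp
    have le1: "1 / real (Suc R) \<le> 1" by simp
    have a1: "\<bar>ind (yen i) (D m x, horo S S' x) - (if yen i \<in> fst e then 1 else 0)\<bar> < 1"
      using t le1 by linarith
    then have mem: "yen i \<in> D m x \<longleftrightarrow> yen i \<in> fst e" by (auto simp: ind_def split: if_splits)
    have a2: "\<bar>horo S S' x (yen i) - real_of_rat (q i)\<bar> < 1 / real (Suc R)" using t by linarith
    have x1: "1 \<le> real (Suc R)" by simp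
    then have "real (Suc R) \<le> real (Suc R) * real (Suc R)"
      using mult_right_mono[of 1 "real (Suc R)" "real (Suc R)"] by simp
    then have "real (Suc R) \<le> 2 * real (Suc R) ^ 2" by (simp add: power2_eq_square)
    then have "\<rho> \<le> 1 / real (Suc R)" unfolding \<rho>_def
      by (rule divide_left_mono) auto
    then have "\<bar>horo S S' x (yen i) - snd e (yen i)\<bar> < 2 / real (Suc R)" using a2 q[of i] by linarith
    then show ?thesis using mem by blast
  qed
  then show ?thesis using mx by blast
qed

lemma good_horoball:
  assumes nu: "\<nu> \<in> Nspace S S'" and G: "\<And>j R L. H j R L \<Longrightarrow> FB j R L \<nu> = 0"
    and pos: "0 < \<nu> e"
  shows "horoball_II S S' f r e"
proof -
  have eC: "e \<in> Cspace S S'" using nu pos unfolding Nspace_def by blast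
  then obtain y where "y \<in> fst e" by (auto simp: Cspace_def)
  moreover obtain j where "yen j = y" using yen_surj by blast
  ultimately have y: "yen j \<in> fst e" by simp
  have "\<forall>R. \<exists>m x. R \<le> m \<and> R \<le> word_len S (fst x) \<and> R \<le> word_len S' (snd x) \<and>
     (\<forall>i<R. (yen i \<in> D m x \<longleftrightarrow> yen i \<in> fst e) \<and> \<bar>horo S S' x (yen i) - snd e (yen i)\<bar> < 2 / real (Suc R))"
    using step_R[OF nu G pos y] by blast
  then have "\<forall>R. \<exists>p. R \<le> fst p \<and> R \<le> word_len S (fst (snd p)) \<and> R \<le> word_len S' (snd (snd p)) \<and>
     (\<forall>i<R. (yen i \<in> D (fst p) (snd p) \<longleftrightarrow> yen i \<in> fst e) \<and> \<bar>horo S S' (snd p) (yen i) - snd e (yen i)\<bar> < 2 / real (Suc R))"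
    by simp
  then obtain p where p: "\<forall>R. R \<le> fst (p R) \<and> R \<le> word_len S (fst (snd (p R))) \<and> R \<le> word_len S' (snd (snd (p R))) \<and>
     (\<forall>i<R. (yen i \<in> D (fst (p R)) (snd (p R)) \<longleftrightarrow> yen i \<in> fst e) \<and> \<bar>horo S S' (snd (p R)) (yen i) - snd e (yen i)\<bar> < 2 / real (Suc R))"
    by (rule choice[THEN exE])
  define m where "m R = fst (p R)" for R
  define x where "x R = snd (p R)" for R
  have mx: "\<And>R. R \<le> m R \<and> R \<le> word_len S (fst (x R)) \<and> R \<le> word_len S' (snd (x R)) \<and>
     (\<forall>i<R. (yen i \<in> D (m R) (x R) \<longleftrightarrow> yen i \<in> fst e) \<and> \<bar>horo S S' (x R) (yen i) - snd e (yen i)\<bar> < 2 / real (Suc R))"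
    using p unfolding m_def x_def by blast
  have l1: "filterlim m at_top sequentially"
    by (rule filterlim_at_top_mono[OF filterlim_ident]) (use mx in \<open>auto intro: always_eventually\<close>)
  have l2: "filterlim (\<lambda>k. wdist S 0 (fst (x k))) at_top sequentially"
    by (rule filterlim_at_top_mono[OF filterlim_ident]) (use mx in \<open>auto intro: always_eventually\<close>)
  have l3: "filterlim (\<lambda>k. wdist S' 0 (snd (x k))) at_top sequentially"
    by (rule filterlim_at_top_mono[OF filterlim_ident]) (use mx in \<open>auto intro: always_eventually\<close>)
  have l4: "limitin (Ctop S S') (\<lambda>k. (D (m k) (x k), horo S S' (x k))) e sequentially"
    by (rule limit_criterion[OF eC]) (use mx in blast)
  show ?thesis unfolding horoball_II_def using l1 l2 l3 l4 by blast
qed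

end




context setting2
begin

lemma main_AE:
  fixes nk :: "nat \<Rightarrow> nat" and P
  assumes "strict_mono nk" "prob_space P" "sets P = sets (vague_borel S S')"
    and "weak_conv_pp S S' (\<lambda>k. law_C S S' f r (nk k)) P"
  shows "AE \<nu> in P. (\<exists>e. 0 < \<nu> e) \<and> (\<forall>e. 0 < \<nu> e \<longrightarrow> horoball_II S S' f r e)"
proof -
  interpret P: prob_space P by (rule assms(2))
  have spP: "space P = Nspace S S'" using sets_eq_imp_space_eq[OF assms(3)] by simp
  have meas: "F \<in> borel_measurable P" if "continuous_map (vague_top S S') euclideanreal F" for F
    unfolding measurable_cong_sets[OF assms(3) refl] by (rule cont_meas[OF that])
  have integ: "integrable P F" if "continuous_map (vague_top S S') euclideanreal F"
      "\<And>\<nu>. 0 \<le> F \<nu> \<and> F \<nu> \<le> 1" for F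
  proof -
    have "AE \<nu> in P. norm (F \<nu>) \<le> 1" using that(2) by (intro AE_I2) (metis abs_of_nonneg real_norm_def)
    then show ?thesis by (rule P.integrable_const_bound[OF _ meas[OF that(1)]])
  qed
  have weak: "(\<lambda>k. \<integral>\<nu>. F \<nu> \<partial>law_C S S' f r (nk k)) \<longlonglongrightarrow> (\<integral>\<nu>. F \<nu> \<partial>P)"
    if "continuous_map (vague_top S S') euclideanreal F" "\<And>\<nu>. 0 \<le> F \<nu> \<and> F \<nu> \<le> 1" for F
  proof -
    have "\<exists>K. \<forall>\<nu>\<in>Nspace S S'. \<bar>F \<nu>\<bar> \<le> K" using that(2) by (intro exI[of _ 1]) (metis abs_of_nonneg)
    then show ?thesis using assms(4) that(1) unfolding weak_conv_pp_def by blast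
  qed
  obtain \<epsilon> :: real where e: "\<epsilon> > 0" and FAl: "\<And>n R. (\<integral>\<nu>. FA R \<nu> \<partial>law_C S S' f r n) \<le> 1 / (1 + (1 + \<epsilon>) ^ R)"
    using FA_law by blast
  have FAP: "(\<integral>\<nu>. FA R \<nu> \<partial>P) \<le> 1 / (1 + (1 + \<epsilon>) ^ R)" for R
    by (rule LIMSEQ_le_const2[OF weak[OF FA_cont FA_bnd]]) (use FAl in auto)
  define N where "N = space P \<inter> (\<Inter>R. FA R -` {1..})"
  have Ns: "N \<in> sets P"
  proof -
    have "\<And>R. FA R -` {1..} \<inter> space P \<in> sets P" using meas[OF FA_cont] by (intro measurable_sets) auto
    then have "(\<Inter>R. FA R -` {1..} \<inter> space P) \<in> sets P" by (intro sets.countable_INT) auto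
    moreover have "N = (\<Inter>R. FA R -` {1..} \<inter> space P)" by (auto simp: N_def)
    ultimately show ?thesis by simp
  qed
  have Nle: "measure P N \<le> 1 / (1 + real R * \<epsilon>)" for R
  proof -
    have "measure P N \<le> measure P {\<nu> \<in> space P. 1 \<le> FA R \<nu>}"
    proof (rule P.finite_measure_mono)
      show "N \<subseteq> {\<nu> \<in> space P. 1 \<le> FA R \<nu>}" by (auto simp: N_def)
      show "{\<nu> \<in> space P. 1 \<le> FA R \<nu>} \<in> sets P" using meas[OF FA_cont] by measurable
    qed
    also have "\<dots> \<le> (\<integral>\<nu>. FA R \<nu> \<partial>P) / 1"
      by (rule integral_Markov_inequality_measure[OF integ[OF FA_cont FA_bnd] Ns])
         (auto intro: AE_I2 simp: FA_bnd)
    also have "\<dots> \<le> 1 / (1 + (1 + \<epsilon>) ^ R)" using FAP by simp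
    also have "\<dots> \<le> 1 / (1 + real R * \<epsilon>)"
    proof (rule divide_left_mono)
      show "1 + real R * \<epsilon> \<le> 1 + (1 + \<epsilon>) ^ R" using Bernoulli_inequality[of \<epsilon> R] e by simp
      show "0 < (1 + (1 + \<epsilon>) ^ R) * (1 + real R * \<epsilon>)" using e by (intro mult_pos_pos) (auto simp: add_pos_nonneg)
    qed simp
    finally show ?thesis .
  qed
  have N0: "measure P N = 0"
  proof (rule ccontr)
    assume "measure P N \<noteq> 0"
    then have mp: "measure P N > 0" using measure_nonneg[of P N] by linarith
    obtain R :: nat where R: "1 / (measure P N * \<epsilon>) < real R" using reals_Archimedean2 by blast
    have "1 < real R * \<epsilon> * measure P N"
      using R mp e by (simp add: field_simps)
    moreover have "measure P N * (1 + real R * \<epsilon>) \<le> 1"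
      using Nle[of R] e by (simp add: field_simps add_pos_nonneg)
    ultimately show False using mp by (simp add: algebra_simps)
  qed
  have AE1: "AE \<nu> in P. \<exists>e. 0 < \<nu> e"
  proof (rule AE_I')
    show "N \<in> null_sets P" using Ns N0 by (simp add: null_sets_def P.emeasure_eq_measure)
    show "{\<nu> \<in> space P. \<not> (\<exists>e. 0 < \<nu> e)} \<subseteq> N"
    proof
      fix \<nu> assume "\<nu> \<in> {\<nu> \<in> space P. \<not> (\<exists>e. 0 < \<nu> e)}"
      then have sp: "\<nu> \<in> space P" and z: "\<nu> = (\<lambda>_. 0)" by (auto simp: fun_eq_iff)
      show "\<nu> \<in> N" using sp unfolding N_def z by (simp add: FA_zero)
    qed
  qed
  have each: "AE \<nu> in P. H j R L \<longrightarrow> FB j R L \<nu> = 0" for j R L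
  proof (cases "H j R L")
    case False then show ?thesis by simp
  next
    case True
    obtain C where C: "\<And>n. R \<le> n \<Longrightarrow> 1 \<le> n \<Longrightarrow> (\<integral>\<nu>. FB j R L \<nu> \<partial>law_C S S' f r n) \<le> C / real n"
      using FB_law[OF True] by blast
    have lim: "(\<lambda>k. \<integral>\<nu>. FB j R L \<nu> \<partial>law_C S S' f r (nk k)) \<longlonglongrightarrow> 0"
    proof (rule tendsto_sandwich[where f="\<lambda>_. 0" and h="\<lambda>k. \<bar>C\<bar> / real k"])
      show "\<forall>\<^sub>F k in sequentially. 0 \<le> (\<integral>\<nu>. FB j R L \<nu> \<partial>law_C S S' f r (nk k))"
        by (intro always_eventually allI integral_nonneg_AE AE_I2) (simp add: FB_bnd)
      show "\<forall>\<^sub>F k in sequentially. (\<integral>\<nu>. FB j R L \<nu> \<partial>law_C S S' f r (nk k)) \<le> \<bar>C\<bar> / real k"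
      proof (rule eventually_mono[OF eventually_ge_at_top[of "max R 1"]])
        fix k assume k: "max R 1 \<le> k"
        have nk: "k \<le> nk k" by (rule seq_suble[OF assms(1)])
        have "(\<integral>\<nu>. FB j R L \<nu> \<partial>law_C S S' f r (nk k)) \<le> C / real (nk k)"
          by (rule C) (use k nk in auto)
        also have "\<dots> \<le> \<bar>C\<bar> / real (nk k)" by (intro divide_right_mono) auto
        also have "\<dots> \<le> \<bar>C\<bar> / real k" using k nk by (intro divide_left_mono) auto
        finally show "(\<integral>\<nu>. FB j R L \<nu> \<partial>law_C S S' f r (nk k)) \<le> \<bar>C\<bar> / real k" .
      qed
    qed (auto intro: lim_const_over_n)
    have "(\<integral>\<nu>. FB j R L \<nu> \<partial>P) = 0"
      using LIMSEQ_unique[OF weak[OF FB_cont FB_bnd] lim] .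
    then have "AE \<nu> in P. FB j R L \<nu> = 0"
      using integral_nonneg_eq_0_iff_AE[OF integ[OF FB_cont FB_bnd]] by (simp add: FB_bnd)
    then show ?thesis by auto
  qed
  have "AE \<nu> in P. \<forall>t::nat \<times> nat \<times> (bool \<times> rat) list. H (fst t) (fst (snd t)) (snd (snd t)) \<longrightarrow>
      FB (fst t) (fst (snd t)) (snd (snd t)) \<nu> = 0"
    unfolding AE_all_countable using each by blast
  then have AE2: "AE \<nu> in P. \<forall>e. 0 < \<nu> e \<longrightarrow> horoball_II S S' f r e"
    using AE_space
  proof eventually_elim
    case (elim \<nu>)
    have G': "\<And>j R L. H j R L \<Longrightarrow> FB j R L \<nu> = 0" using elim(1) by (metis fst_conv snd_conv)
    have sp: "\<nu> \<in> Nspace S S'" using elim(2) spP by simp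
    show ?case using good_horoball[OF sp G'] by blast
  qed
  show ?thesis using AE1 AE2 by (auto elim: AE_mp)
qed

end



theorem lemma4p1:
  fixes S :: "'a::group_add set" and S' :: "'b::group_add set"
    and f r nk :: "nat \<Rightarrow> nat"
    and P :: "((('a \<times> 'b) set \<times> ('a \<times> 'b \<Rightarrow> real)) \<Rightarrow> nat) measure"
  assumes "finite S" "generates S" "finite S'" "generates S'"
    and "nonamenable S" "nonamenable S'"
    and "mono f" "f 0 = 0" "strict_mono r"
    and "\<exists>A B. 0 < A \<and> (\<forall>n. A \<le> real (ball_vol S' (f (r n))) / real (ball_vol S (r n))
                              \<and> real (ball_vol S' (f (r n))) / real (ball_vol S (r n)) \<le> B)"
    and "\<forall>m. \<exists>N. \<forall>n\<ge>N. \<bar>real (f (n + m)) - real (f n) - cexp S S' * real m\<bar> \<le> 1"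
    and "strict_mono nk"
    and "prob_space P" "sets P = sets (vague_borel S S')"
    and "weak_conv_pp S S' (\<lambda>k. law_C S S' f r (nk k)) P"
  shows "AE \<nu> in P. (\<exists>e. 0 < \<nu> e) \<and> (\<forall>e. 0 < \<nu> e \<longrightarrow> horoball_II S S' f r e)"
proof -
  obtain A B where AB: "0 < A" "\<And>n. A \<le> real (ball_vol S' (f (r n))) / real (ball_vol S (r n))
      \<and> real (ball_vol S' (f (r n))) / real (ball_vol S (r n)) \<le> B"
    using assms(10) by blast
  interpret setting2 S S' f r A B
    by unfold_locales (use assms AB in auto)
  show ?thesis by (rule main_AE[OF assms(12) assms(13) assms(14) assms(15)])
qed

end
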